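(* Let $F$ satisfy the standing assumptions below, $\lambda>0$, $\varepsilon>0$ with $\varepsilon\le\frac72(G+\sigma)$, and $\Delta_F:=F(\mathbf{x}_0)-\inf_{\mathbf{x}}F(\mathbf{x})<\infty$. Consider the anchoring scheme: set $\mathbf{a}_1=\mathbf{x}_0$; for $n=1,\dots,N$, run the general conversion scheme below for $T$ iterations starting from $\mathbf{x}^{(n)}_0=\mathbf{w}^{(n)}_0=\mathbf{a}_n$ with the choice $\mathbf{x}^{(n)}_t=\mathbf{a}_n$ for all $t\in[T]$, producing iterates $\mathbf{x}^{(n)}_t,\mathbf{w}^{(n)}_t,\mathbf{y}^{(n)}_t$, and then sample $\mathbf{a}_{n+1}$ uniformly at random from $\{\mathbf{w}^{(n)}_t\}_{t=1}^T$. In each epoch use an online learner satisfying, for all $t\in[T]$ and all comparators $\mathbf{u}$ (deterministic or depending on the run), $\mathbb{E}[\mathrm{Regret}^\beta_t(\mathbf{u})]\le\frac{2\|\mathbf{u}\|(G+\sigma)}{\beta\sqrt{1-\beta}}+\frac\mu2\|\mathbf{u}\|^2$, with $\beta=1-\left(\frac{\varepsilon}{7(G+\sigma)}\right)^2$ and $\mu=2\lambda^{1/2}\varepsilon^{1/2}$. If $N\ge4\Delta_F\lambda^{1/2}\varepsilon^{-3/2}$ and $T\ge49(G+\sigma)^2\varepsilon^{-2}$, then $$\mathbb{E}_{n\sim\mathrm{Unif}([N])}\,\mathbb{E}_\tau\|\nabla F(\overline{\mathbf{y}}^{(n)}_\tau)\|_\lambda\le4\varepsilon,$$ where $\overlin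e{\mathbf{y}}^{(n)}_t:=\frac{1-\beta}{1-\beta^t}\sum_{s=1}^t\beta^{t-s}\mathbf{y}^{(n)}_s$.
   Context: Norms are Euclidean. Standing assumptions: $F:\mathbb{R}^d\to\mathbb{R}$ differentiable; for all $\mathbf{x},\mathbf{w}$, $F(\mathbf{x})-F(\mathbf{w})=\int_0^1\langle\nabla F(\mathbf{w}+t(\mathbf{x}-\mathbf{w})),\mathbf{x}-\mathbf{w}\rangle\,dt$; $\|\nabla F\|\le G$ everywhere. The stochastic gradient oracle at $\mathbf{x}$ independently returns $\mathbf{g}$ with $\mathbb{E}\mathbf{g}=\nabla F(\mathbf{x})$, $\mathbb{E}\|\mathbf{g}-\nabla F(\mathbf{x})\|^2\le\sigma^2$. $\|\nabla F(\mathbf{x})\|_\lambda := \inf\{\|\mathbb{E}_{\mathbf{w}\sim p}\nabla F(\mathbf{w})\|+\lambda\mathbb{E}_{\mathbf{w}\sim p}\|\mathbf{w}-\mathbf{x}\|^2\}$ over probability distributions $p$ on $\mathbb{R}^d$ with mean $\mathbf{x}$. General conversion scheme: input $\mathbf{x}_0=\mathbf{w}_0$, $T$, $\mu\ge0$, online learner $\mathcal{A}$ (output $\Delta_t$ at round $t$ based on $\ell_1,\dots,\ell_{t-1}$). For $t=1,\dots,T$: receive $\Delta_t$; choose $\mathbf{x}_t$; $\mathbf{w}_t=\mathbf{x}_t+\Delta_t$; $\mathbf{y}_t=\mathbf{x}_t+s_t\Delta_t$, $s_t\sim\mathrm{Unif}[0,1]$ i.i.d.; $\mathbf{g}_t$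 = oracle output at $\mathbf{y}_t$; send $\ell_t(\mathbf{v})=\langle\mathbf{g}_t,\mathbf{v}\rangle+\frac\mu2\|\mathbf{v}\|^2$ to $\mathcal{A}$. $\mathrm{Regret}^\beta_t(\mathbf{u}) := \sum_{s=1}^t\beta^{t-s}(\ell_s(\Delta_s)-\ell_s(\mathbf{u}))$. $\tau$ is independent of everything with $\Pr(\tau=t)=\frac{1-\beta^t}{T}$ ($t\le T-1$), $\Pr(\tau=T)=\frac{1-\beta^T}{(1-\beta)T}$; $\mathbb{E}_\tau$ is expectation over $\tau$ and all algorithmic randomness. *)

theory Defs
  imports "HOL-Probability.Probability"
begin

text \<open>Gradient-norm surrogate: the infimum over Borel probability distributions p on the
space with mean x of  norm (E_p gradF) + lam * E_p (norm (w - x))^2.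
Distributions with infinite second moment contribute +infinity and are omitted.\<close>
definition lambda_norm :: "('a::euclidean_space \<Rightarrow> 'a) \<Rightarrow> real \<Rightarrow> 'a \<Rightarrow> real" where
  "lambda_norm gF lam x =
     Inf {norm (\<integral>w. gF w \<partial>p) + lam * (\<integral>w. (norm (w - x))\<^sup>2 \<partial>p) | p.
            prob_space p \<and> sets p = sets borel \<and> integrable p (\<lambda>w. w) \<and> (\<integral>w. w \<partial>p) = x
            \<and> integrable p gF \<and> integrable p (\<lambda>w. (norm (w - x))\<^sup>2)}"

text \<open>Anchors: a_1 = x0, a_(n+1) = w^(n)_(J_n) = a_n + D n (J_n) (index 0 is unused).\<close>
fun anchor :: "'a::real_vector \<Rightarrow> (nat \<Rightarrow> nat \<Rightarrow> 'b \<Rightarrow> 'a) \<Rightarrow> (nat \<Rightarrow> 'b \<Rightarrow> nat) \<Rightarrow> nat \<Rightarrow> 'b \<Rightarrow> 'a" where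
  "anchor x0 D J 0 \<omega> = x0"
| "anchor x0 D J (Suc 0) \<omega> = x0"
| "anchor x0 D J (Suc (Suc n)) \<omega> = anchor x0 D J (Suc n) \<omega> + D (Suc n) (J (Suc n) \<omega>) \<omega>"

definition iter_y :: "'a::real_vector \<Rightarrow> (nat \<Rightarrow> nat \<Rightarrow> 'b \<Rightarrow> 'a) \<Rightarrow> (nat \<Rightarrow> nat \<Rightarrow> 'b \<Rightarrow> real)
    \<Rightarrow> (nat \<Rightarrow> 'b \<Rightarrow> nat) \<Rightarrow> nat \<Rightarrow> nat \<Rightarrow> 'b \<Rightarrow> 'a" where
  "iter_y x0 D s J n t \<omega> = anchor x0 D J n \<omega> + s n t \<omega> *\<^sub>R D n t \<omega>"

definition ybar :: "real \<Rightarrow> 'a::real_vector \<Rightarrow> (nat \<Rightarrow> nat \<Rightarrow> 'b \<Rightarrow> 'a) \<Rightarrow> (nat \<Rightarrow> nat \<Rightarrow> 'b \<Rightarrow> real)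
    \<Rightarrow> (nat \<Rightarrow> 'b \<Rightarrow> nat) \<Rightarrow> nat \<Rightarrow> nat \<Rightarrow> 'b \<Rightarrow> 'a" where
  "ybar \<beta> x0 D s J n t \<omega> =
     ((1 - \<beta>) / (1 - \<beta> ^ t)) *\<^sub>R (\<Sum>r = 1..t. \<beta> ^ (t - r) *\<^sub>R iter_y x0 D s J n r \<omega>)"

definition loss :: "real \<Rightarrow> 'a::real_inner \<Rightarrow> 'a \<Rightarrow> real" where
  "loss \<mu> gv v = gv \<bullet> v + \<mu> / 2 * (norm v)\<^sup>2"

definition regret :: "real \<Rightarrow> real \<Rightarrow> (nat \<Rightarrow> nat \<Rightarrow> 'b \<Rightarrow> 'a::real_inner) \<Rightarrow> (nat \<Rightarrow> nat \<Rightarrow> 'b \<Rightarrow> 'a)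
    \<Rightarrow> nat \<Rightarrow> nat \<Rightarrow> ('b \<Rightarrow> 'a) \<Rightarrow> 'b \<Rightarrow> real" where
  "regret \<beta> \<mu> g D n t u \<omega> =
     (\<Sum>r = 1..t. \<beta> ^ (t - r) * (loss \<mu> (g n r \<omega>) (D n r \<omega>) - loss \<mu> (g n r \<omega>) (u \<omega>)))"

definition tau_prob :: "real \<Rightarrow> nat \<Rightarrow> nat \<Rightarrow> real" where
  "tau_prob \<beta> T t = (if t < T then (1 - \<beta> ^ t) / real T else (1 - \<beta> ^ T) / ((1 - \<beta>) * real T))"

end

theory Submission
  imports Defs
begin

lemma indep_var_from_sets:
  assumes P: "prob_space M" and sub: "subalgebra M Fa"
    and X: "X \<in> measurable Fa S" and Y: "Y \<in> measurable M T"
    and ind: "prob_space.indep_set M (sets Fa) (sets (vimage_algebra (space M) Y T))"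
  shows "prob_space.indep_var M S X T Y"
proof -
  interpret prob_space M by fact
  have XM: "X \<in> measurable M S" using measurable_from_subalg[OF sub X] .
  have sp: "space Fa = space M" using sub by (simp add: subalgebra_def)
  have s1: "sigma_sets (space M) {X -` A \<inter> space M | A. A \<in> sets S} \<subseteq> sets Fa"
    unfolding sp[symmetric]
    by (rule sets.sigma_sets_subset) (auto intro: measurable_sets[OF X])
  have s2: "sigma_sets (space M) {Y -` A \<inter> space M | A. A \<in> sets T} = sets (vimage_algebra (space M) Y T)"
    by (simp add: sets_vimage_algebra)
  have "indep_set (sigma_sets (space M) {X -` A \<inter> space M | A. A \<in> sets S})
                  (sigma_sets (space M) {Y -` A \<inter> space M | A. A \<in> sets T})"
    using ind unfolding indep_set_def s2
    by (rule indep_sets_mono_sets) (use s1 in \<open>auto split: bool.split\<close>)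
  then show ?thesis unfolding indep_var_eq using XM Y by auto
qed

lemma geom_sum_beta:
  fixes \<beta> :: real assumes "\<beta> \<noteq> 1"
  shows "(\<Sum>r = 1..t. \<beta> ^ (t - r)) = (1 - \<beta> ^ t) / (1 - \<beta>)"
proof (induction t)
  case 0 then show ?case by simp
next
  case (Suc t)
  have "(\<Sum>r = 1..Suc t. \<beta> ^ (Suc t - r)) = \<beta> * (\<Sum>r = 1..t. \<beta> ^ (t - r)) + 1"
  proof -
    have "(\<Sum>r = 1..Suc t. \<beta> ^ (Suc t - r)) = (\<Sum>r = 1..t. \<beta> ^ (Suc t - r)) + 1"
      by (simp add: sum.atLeast1_atMost_eq)
    also have "(\<Sum>r = 1..t. \<beta> ^ (Suc t - r)) = (\<Sum>r = 1..t. \<beta> * \<beta> ^ (t - r))"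
      by (rule sum.cong) (auto simp: Suc_diff_le)
    finally show ?thesis by (simp add: sum_distrib_left)
  qed
  also have "\<dots> = \<beta> * ((1 - \<beta> ^ t) / (1 - \<beta>)) + 1" using Suc by simp
  also have "\<dots> = (1 - \<beta> ^ Suc t) / (1 - \<beta>)"
    using assms by (simp add: field_simps)
  finally show ?case .
qed

lemma disc_decomp:
  fixes a :: "nat \<Rightarrow> real" and \<beta> :: real
  shows "(\<Sum>s = 1..T. a s) = (1 - \<beta>) * (\<Sum>t = 1..<T. \<Sum>r = 1..t. \<beta> ^ (t - r) * a r)
            + (\<Sum>r = 1..T. \<beta> ^ (T - r) * a r)"
proof (induction T)
  case 0 then show ?case by simp
next
  case (Suc T)
  have e: "(\<Sum>r = 1..Suc T. \<beta> ^ (Suc T - r) * a r) = \<beta> * (\<Sum>r = 1..T. \<beta> ^ (T - r) * a r) + a (Suc T)"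
  proof -
    have "(\<Sum>r = 1..Suc T. \<beta> ^ (Suc T - r) * a r) = (\<Sum>r = 1..T. \<beta> ^ (Suc T - r) * a r) + a (Suc T)"
      by simp
    also have "(\<Sum>r = 1..T. \<beta> ^ (Suc T - r) * a r) = (\<Sum>r = 1..T. \<beta> * (\<beta> ^ (T - r) * a r))"
      by (rule sum.cong) (auto simp: Suc_diff_le)
    finally show ?thesis by (simp add: sum_distrib_left)
  qed
  have "(\<Sum>t = 1..<Suc T. \<Sum>r = 1..t. \<beta> ^ (t - r) * a r) = (\<Sum>t = 1..<T. \<Sum>r = 1..t. \<beta> ^ (t - r) * a r) + (if T \<ge> 1 then (\<Sum>r = 1..T. \<beta> ^ (T - r) * a r) else 0)"
    by (cases T) auto
  then show ?case using Suc e by (cases T) (auto simp: algebra_simps)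
qed

lemma L2_integrable_bound:
  fixes f h :: "'m \<Rightarrow> 'v::euclidean_space" and k :: "'m \<Rightarrow> real"
  assumes "integrable M (\<lambda>x. (norm (f x))\<^sup>2)" "integrable M (\<lambda>x. (norm (h x))\<^sup>2)"
    and "k \<in> borel_measurable M"
    and "\<And>x. x \<in> space M \<Longrightarrow> \<bar>k x\<bar> \<le> norm (f x) * norm (h x)"
  shows "integrable M k"
proof -
  have i: "integrable M (\<lambda>x. (norm (f x))\<^sup>2 + (norm (h x))\<^sup>2)" using assms by auto
  show ?thesis
  proof (rule Bochner_Integration.integrable_bound[OF i assms(3)], rule AE_I2)
    fix x assume "x \<in> space M"
    have "0 \<le> (norm (f x) - norm (h x))\<^sup>2" by simp
    then have "2 * (norm (f x) * norm (h x)) \<le> (norm (f x))\<^sup>2 + (norm (h x))\<^sup>2"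
      by (simp add: power2_eq_square algebra_simps)
    then have "norm (f x) * norm (h x) \<le> (norm (f x))\<^sup>2 + (norm (h x))\<^sup>2"
      using mult_nonneg_nonneg[of "norm (f x)" "norm (h x)", OF norm_ge_zero norm_ge_zero] by linarith
    then show "norm (k x) \<le> norm ((norm (f x))\<^sup>2 + (norm (h x))\<^sup>2)"
      using assms(4)[OF \<open>x \<in> space M\<close>] by auto
  qed
qed

lemma gradF_measurable:
  fixes F :: "'a::euclidean_space \<Rightarrow> real"
  assumes grad: "\<And>x. (F has_derivative (\<lambda>h. gradF x \<bullet> h)) (at x)"
  shows "gradF \<in> borel_measurable borel"
proof (subst borel_measurable_euclidean_space, intro ballI)
  fix b :: 'a assume b: "b \<in> Basis"
  have contF: "continuous_on UNIV F"
    using grad has_derivative_continuous continuous_at_imp_continuous_on by blast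
  show "(\<lambda>x. gradF x \<bullet> b) \<in> borel_measurable borel"
  proof (rule borel_measurable_LIMSEQ_real)
    fix x :: 'a
    have d: "((\<lambda>r. F (x + r *\<^sub>R b)) has_real_derivative (gradF x \<bullet> b)) (at 0)"
    proof -
      have l: "((\<lambda>r::real. x + r *\<^sub>R b) has_derivative (\<lambda>r. r *\<^sub>R b)) (at 0)"
        by (auto intro!: derivative_eq_intros)
      have g0: "(F has_derivative (\<lambda>h. gradF x \<bullet> h)) (at (x + 0 *\<^sub>R b))" using grad by simp
      from diff_chain_at[OF l g0]
      have "((\<lambda>r. F (x + r *\<^sub>R b)) has_derivative (\<lambda>r. gradF x \<bullet> (r *\<^sub>R b))) (at 0)"
        by (simp add: o_def)
      moreover have "(\<lambda>r. gradF x \<bullet> (r *\<^sub>R b)) = (*) (gradF x \<bullet> b)" by (auto simp: fun_eq_iff)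
      ultimately show ?thesis
        by (simp add: has_field_derivative_def)
    qed
    then have lim: "((\<lambda>r. (F (x + r *\<^sub>R b) - F x) / r) \<longlongrightarrow> gradF x \<bullet> b) (at 0)"
      unfolding has_field_derivative_iff by simp
    have s: "(\<lambda>i::nat. 1 / real (Suc i)) \<longlonglongrightarrow> 0"
      using LIMSEQ_Suc[OF lim_const_over_n[of 1]] by simp
    have "filterlim (\<lambda>i::nat. 1 / real (Suc i)) (at 0) sequentially"
      unfolding filterlim_at using s by (auto intro!: always_eventually)
    from filterlim_compose[OF lim this]
    show "(\<lambda>i. (F (x + (1 / real (Suc i)) *\<^sub>R b) - F x) / (1 / real (Suc i))) \<longlonglongrightarrow> gradF x \<bullet> b"
      by simp
  next
    fix i :: nat
    show "(\<lambda>x. (F (x + (1 / real (Suc i)) *\<^sub>R b) - F x) / (1 / real (Suc i))) \<in> borel_measurable borel"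
    proof (intro borel_measurable_continuous_onI continuous_intros)
      show "continuous_on UNIV (\<lambda>x. F (x + (1 / real (Suc i)) *\<^sub>R b))"
        by (rule continuous_on_compose2[OF contF]) (auto intro!: continuous_intros)
    qed (use contF in auto)
  qed
qed

lemma indep_pair_distr:
  assumes P: "prob_space M" and sub: "subalgebra M Fa"
    and X: "X \<in> measurable Fa S" and Y: "Y \<in> measurable M T"
    and ind: "prob_space.indep_set M (sets Fa) (sets (vimage_algebra (space M) Y T))"
  shows "distr M S X \<Otimes>\<^sub>M distr M T Y = distr M (S \<Otimes>\<^sub>M T) (\<lambda>x. (X x, Y x))"
proof -
  interpret prob_space M by fact
  have XM: "X \<in> measurable M S" using measurable_from_subalg[OF sub X] .
  have sp: "space Fa = space M" using sub by (simp add: subalgebra_def)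
  let ?S = "distr M S X" and ?T = "distr M T Y" and ?J = "distr M (S \<Otimes>\<^sub>M T) (\<lambda>x. (X x, Y x))"
  have XY: "(\<lambda>x. (X x, Y x)) \<in> measurable M (S \<Otimes>\<^sub>M T)" using XM Y by (rule measurable_Pair)
  interpret XP: prob_space ?S by (rule prob_space_distr) fact
  interpret YP: prob_space ?T by (rule prob_space_distr) fact
  interpret XYP: pair_prob_space ?S ?T ..
  show ?thesis
  proof (rule pair_measure_eqI)
    show "sigma_finite_measure ?S" ..
    show "sigma_finite_measure ?T" ..
    fix A B assume A: "A \<in> sets ?S" and B: "B \<in> sets ?T"
    have A': "X -` A \<inter> space M \<in> sets Fa" using measurable_sets[OF X, of A] A sp by simp
    have B': "Y -` B \<inter> space M \<in> sets (vimage_algebra (space M) Y T)"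
      using B by (auto simp: sets_vimage_algebra intro!: sigma_sets.Basic)
    have "emeasure ?J (A \<times> B) = emeasure M ((\<lambda>x. (X x, Y x)) -` (A \<times> B) \<inter> space M)"
      using A B by (intro emeasure_distr[OF XY]) auto
    also have "(\<lambda>x. (X x, Y x)) -` (A \<times> B) \<inter> space M = (X -` A \<inter> space M) \<inter> (Y -` B \<inter> space M)" by auto
    also have "emeasure M \<dots> = emeasure M (X -` A \<inter> space M) * emeasure M (Y -` B \<inter> space M)"
      using indep_setD[OF ind A' B'] by (simp add: emeasure_eq_measure measure_nonneg ennreal_mult)
    also have "\<dots> = emeasure ?S A * emeasure ?T B"
      using XM Y A B by (simp add: emeasure_distr)
    finally show "emeasure ?S A * emeasure ?T B = emeasure ?J (A \<times> B)" by simp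
  qed simp
qed

lemma uniform01_integral:
  fixes f :: "real \<Rightarrow> real"
  assumes fm: "f \<in> borel_measurable borel" and fb: "\<And>r. \<bar>f r\<bar> \<le> B"
    and hi: "(f has_integral I) {0..1}"
  shows "(\<integral>r. f r \<partial>uniform_measure lborel {0..1}) = I"
proof -
  have U: "uniform_measure lborel {0..1::real} = density lborel (\<lambda>r. ennreal (indicator {0..1} r))"
    by (simp add: uniform_measure_def ennreal_indicator divide_ennreal_def)
  have "(\<integral>r. f r \<partial>uniform_measure lborel {0..1}) = (\<integral>r. indicator {0..1} r *\<^sub>R f r \<partial>lborel)"
    unfolding U by (rule integral_density) (use fm in auto)
  also have "\<dots> = (LINT r : {0..1} | lborel. f r)"
    by (simp add: set_lebesgue_integral_def)
  also have "\<dots> = integral {0..1} f"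
  proof (rule set_borel_integral_eq_integral)
    show "set_integrable lborel {0..1} f"
      unfolding set_integrable_def
    proof (rule Bochner_Integration.integrable_bound[where f="\<lambda>r. indicator {0..1::real} r *\<^sub>R B"])
      show "integrable lborel (\<lambda>r. indicator {0..1::real} r *\<^sub>R B)"
        by (intro integrable_scaleR_left) (auto simp: integrable_indicator_iff)
      show "(\<lambda>r. indicator {0..1} r *\<^sub>R f r) \<in> borel_measurable lborel" using fm by simp
      show "AE x in lborel. norm (indicator {0..1} x *\<^sub>R f x) \<le> norm (indicator {0..1::real} x *\<^sub>R B)"
        using fb by (auto simp: indicator_def intro!: AE_I2 order_trans[OF _ abs_ge_self])
    qed
  qed
  also have "\<dots> = I" using hi by (rule integral_unique)
  finally show ?thesis .
qed

lemma exp_norm_le_sqrt: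
  fixes X :: "'m \<Rightarrow> 'v::euclidean_space"
  assumes P: "prob_space M" and Xm: "X \<in> borel_measurable M"
    and sq: "integrable M (\<lambda>x. (norm (X x))\<^sup>2)"
  shows "integrable M (\<lambda>x. norm (X x))" "(\<integral>x. norm (X x) \<partial>M) \<le> sqrt (\<integral>x. (norm (X x))\<^sup>2 \<partial>M)"
proof -
  interpret prob_space M by fact
  show i: "integrable M (\<lambda>x. norm (X x))"
    by (rule square_integrable_imp_integrable) (use Xm sq in auto)
  define m where "m = (\<integral>x. norm (X x) \<partial>M)"
  have "0 \<le> (\<integral>x. (norm (X x) - m)\<^sup>2 \<partial>M)" by simp
  also have "(\<integral>x. (norm (X x) - m)\<^sup>2 \<partial>M) = (\<integral>x. (norm (X x))\<^sup>2 - 2 * m * norm (X x) + m\<^sup>2 \<partial>M)"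
    by (simp add: power2_diff algebra_simps)
  also have "\<dots> = (\<integral>x. (norm (X x))\<^sup>2 \<partial>M) - 2 * m * m + m\<^sup>2"
    using i sq by (simp add: prob_space m_def)
  finally have "m\<^sup>2 \<le> (\<integral>x. (norm (X x))\<^sup>2 \<partial>M)" by (simp add: power2_eq_square)
  then have "sqrt (m\<^sup>2) \<le> sqrt (\<integral>x. (norm (X x))\<^sup>2 \<partial>M)" by (rule real_sqrt_le_mono)
  moreover have "m \<ge> 0" unfolding m_def by simp
  ultimately show "(\<integral>x. norm (X x) \<partial>M) \<le> sqrt (\<integral>x. (norm (X x))\<^sup>2 \<partial>M)" by (simp add: m_def)
qed

lemma F_lip:
  fixes F :: "'a::euclidean_space \<Rightarrow> real"
  assumes ii: "\<And>x w. ((\<lambda>t. gradF (w + t *\<^sub>R (x - w)) \<bullet> (x - w)) has_integral (F x - F w)) {0..1}"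
    and gb: "\<And>x. norm (gradF x) \<le> G"
  shows "\<bar>F x - F w\<bar> \<le> G * norm (x - w)"
proof -
  have "norm (F x - F w) \<le> G * norm (x - w) * Henstock_Kurzweil_Integration.content (cbox (0::real) 1)"
  proof (rule has_integral_bound)
    show "0 \<le> G * norm (x - w)" using order_trans[OF norm_ge_zero gb[of x]] by simp
    show "((\<lambda>t. gradF (w + t *\<^sub>R (x - w)) \<bullet> (x - w)) has_integral (F x - F w)) (cbox 0 1)"
      using ii by simp
    fix t :: real
    show "norm (gradF (w + t *\<^sub>R (x - w)) \<bullet> (x - w)) \<le> G * norm (x - w)"
      using Cauchy_Schwarz_ineq2[of "gradF (w + t *\<^sub>R (x - w))" "x - w"] gb[of "w + t *\<^sub>R (x - w)"]
      by (simp add: mult_right_mono order_trans)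
  qed
  then show ?thesis by simp
qed

lemma descent:
  fixes F :: "'a::euclidean_space \<Rightarrow> real" and gradF :: "'a \<Rightarrow> 'a"
    and a d :: "'m \<Rightarrow> 'a" and s :: "'m \<Rightarrow> real"
  assumes grad: "\<And>x. (F has_derivative (\<lambda>h. gradF x \<bullet> h)) (at x)"
    and ii: "\<And>x w. ((\<lambda>t. gradF (w + t *\<^sub>R (x - w)) \<bullet> (x - w)) has_integral (F x - F w)) {0..1}"
    and gb: "\<And>x. norm (gradF x) \<le> G"
    and P: "prob_space M" and sub: "subalgebra M Fa"
    and am: "a \<in> borel_measurable Fa" and dm: "d \<in> borel_measurable Fa"
    and sm: "s \<in> borel_measurable M"
    and su: "distr M borel s = uniform_measure lborel {0..1}"
    and ind: "prob_space.indep_set M (sets Fa) (sets (vimage_algebra (space M) s borel))"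
    and di: "integrable M (\<lambda>\<omega>. norm (d \<omega>))"
  shows "integrable M (\<lambda>\<omega>. gradF (a \<omega> + s \<omega> *\<^sub>R d \<omega>) \<bullet> d \<omega>)"
    "(\<integral>\<omega>. F (a \<omega> + d \<omega>) - F (a \<omega>) \<partial>M) = (\<integral>\<omega>. gradF (a \<omega> + s \<omega> *\<^sub>R d \<omega>) \<bullet> d \<omega> \<partial>M)"
proof -
  interpret prob_space M by fact
  have gm[measurable]: "gradF \<in> borel_measurable borel" by (rule gradF_measurable[OF grad])
  have Fm[measurable]: "F \<in> borel_measurable borel"
    using grad has_derivative_continuous continuous_at_imp_continuous_on
    by (intro borel_measurable_continuous_onI) blast
  have am'[measurable]: "a \<in> borel_measurable M" using measurable_from_subalg[OF sub am] .
  have dm'[measurable]: "d \<in> borel_measurable M" using measurable_from_subalg[OF sub dm] .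
  note sm[measurable]
  define X where "X = (\<lambda>\<omega>. (a \<omega>, d \<omega>))"
  have Xm: "X \<in> measurable Fa (borel \<Otimes>\<^sub>M borel)" unfolding X_def using am dm by (rule measurable_Pair)
  have XmM[measurable]: "X \<in> measurable M (borel \<Otimes>\<^sub>M borel)" using measurable_from_subalg[OF sub Xm] .
  define PX where "PX = distr M (borel \<Otimes>\<^sub>M borel) X"
  define PS where "PS = distr M borel s"
  have joint: "PX \<Otimes>\<^sub>M PS = distr M ((borel \<Otimes>\<^sub>M borel) \<Otimes>\<^sub>M borel) (\<lambda>\<omega>. (X \<omega>, s \<omega>))"
    unfolding PX_def PS_def by (rule indep_pair_distr[OF P sub Xm sm ind])
  define h where "h = (\<lambda>p::('a \<times> 'a) \<times> real. gradF (fst (fst p) + snd p *\<^sub>R snd (fst p)) \<bullet> snd (fst p))"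
  have hm[measurable]: "h \<in> borel_measurable ((borel \<Otimes>\<^sub>M borel) \<Otimes>\<^sub>M borel)"
    unfolding h_def by measurable
  have hb: "\<bar>h p\<bar> \<le> G * norm (snd (fst p))" for p
    unfolding h_def
    using Cauchy_Schwarz_ineq2[of "gradF (fst (fst p) + snd p *\<^sub>R snd (fst p))" "snd (fst p)"]
      gb[of "fst (fst p) + snd p *\<^sub>R snd (fst p)"]
    by (simp add: mult_right_mono order_trans)
  have hX: "(\<lambda>\<omega>. h (X \<omega>, s \<omega>)) = (\<lambda>\<omega>. gradF (a \<omega> + s \<omega> *\<^sub>R d \<omega>) \<bullet> d \<omega>)"
    unfolding h_def X_def by simp
  have intM: "integrable M (\<lambda>\<omega>. h (X \<omega>, s \<omega>))"
  proof (rule Bochner_Integration.integrable_bound[where f="\<lambda>\<omega>. G * norm (d \<omega>)"])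
    show "integrable M (\<lambda>\<omega>. G * norm (d \<omega>))" using di by simp
    show "(\<lambda>\<omega>. h (X \<omega>, s \<omega>)) \<in> borel_measurable M" by measurable
    have "G \<ge> 0" using gb[of 0] norm_ge_zero[of "gradF 0"] by linarith
    then show "AE \<omega> in M. norm (h (X \<omega>, s \<omega>)) \<le> norm (G * norm (d \<omega>))"
      using hb by (auto simp: X_def intro!: AE_I2 order_trans[OF _ abs_ge_self])
  qed
  then show "integrable M (\<lambda>\<omega>. gradF (a \<omega> + s \<omega> *\<^sub>R d \<omega>) \<bullet> d \<omega>)" using hX by simp
  have intJ: "integrable (PX \<Otimes>\<^sub>M PS) h"
    unfolding joint by (subst integrable_distr_eq) (use intM in auto)
  interpret PXp: prob_space PX unfolding PX_def by (rule prob_space_distr) simp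
  interpret PSp: prob_space PS unfolding PS_def by (rule prob_space_distr) simp
  interpret PP: pair_prob_space PX PS ..
  have inner: "(\<integral>r. h (z, r) \<partial>PS) = F (fst z + snd z) - F (fst z)" for z
  proof -
    have "(\<integral>r. h (z, r) \<partial>PS) = (\<integral>r. gradF (fst z + r *\<^sub>R snd z) \<bullet> snd z \<partial>uniform_measure lborel {0..1})"
      unfolding PS_def su h_def by simp
    also have "\<dots> = F (fst z + snd z) - F (fst z)"
    proof (rule uniform01_integral)
      show "(\<lambda>r. gradF (fst z + r *\<^sub>R snd z) \<bullet> snd z) \<in> borel_measurable borel" by measurable
      show "\<bar>gradF (fst z + r *\<^sub>R snd z) \<bullet> snd z\<bar> \<le> G * norm (snd z)" for r
        using hb[of "(z, r)"] unfolding h_def by simp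
      show "((\<lambda>r. gradF (fst z + r *\<^sub>R snd z) \<bullet> snd z) has_integral F (fst z + snd z) - F (fst z)) {0..1}"
        using ii[where x="fst z + snd z" and w="fst z"] by simp
    qed
    finally show ?thesis .
  qed
  have "(\<integral>\<omega>. gradF (a \<omega> + s \<omega> *\<^sub>R d \<omega>) \<bullet> d \<omega> \<partial>M) = (\<integral>\<omega>. h (X \<omega>, s \<omega>) \<partial>M)"
    using hX by simp
  also have "\<dots> = integral\<^sup>L (PX \<Otimes>\<^sub>M PS) h"
    unfolding joint by (subst integral_distr) auto
  also have "\<dots> = (\<integral>z. (\<integral>r. h (z, r) \<partial>PS) \<partial>PX)"
    by (rule PP.integral_fst'[OF intJ, symmetric])
  also have "\<dots> = (\<integral>z. F (fst z + snd z) - F (fst z) \<partial>PX)"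
    using inner by simp
  also have "\<dots> = (\<integral>\<omega>. F (a \<omega> + d \<omega>) - F (a \<omega>) \<partial>M)"
    unfolding PX_def by (subst integral_distr) (auto simp: X_def)
  finally show "(\<integral>\<omega>. F (a \<omega> + d \<omega>) - F (a \<omega>) \<partial>M) = (\<integral>\<omega>. gradF (a \<omega> + s \<omega> *\<^sub>R d \<omega>) \<bullet> d \<omega> \<partial>M)" ..
qed

lemma indep_var_from_sets2:
  assumes P: "prob_space M" and sub: "subalgebra M Fa"
    and X: "X \<in> measurable Fa S" and Y: "Y \<in> measurable M T" and f: "f \<in> measurable T S'"
    and ind: "prob_space.indep_set M (sets Fa) (sets (vimage_algebra (space M) Y T))"
  shows "prob_space.indep_var M S X S' (\<lambda>\<omega>. f (Y \<omega>))"
proof -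
  interpret prob_space M by fact
  have XM: "X \<in> measurable M S" using measurable_from_subalg[OF sub X] .
  have sp: "space Fa = space M" using sub by (simp add: subalgebra_def)
  have s1: "sigma_sets (space M) {X -` A \<inter> space M | A. A \<in> sets S} \<subseteq> sets Fa"
    unfolding sp[symmetric]
    by (rule sets.sigma_sets_subset) (auto intro: measurable_sets[OF X])
  have s2: "sigma_sets (space M) {(\<lambda>\<omega>. f (Y \<omega>)) -` A \<inter> space M | A. A \<in> sets S'} \<subseteq> sets (vimage_algebra (space M) Y T)"
  proof -
    have "{(\<lambda>\<omega>. f (Y \<omega>)) -` A \<inter> space M | A. A \<in> sets S'} \<subseteq> sets (vimage_algebra (space M) Y T)"
    proof safe
      fix A x assume A: "A \<in> sets S'"
      have "(\<lambda>\<omega>. f (Y \<omega>)) -` A \<inter> space M = Y -` (f -` A \<inter> space T) \<inter> space M"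
        using measurable_space[OF Y] by auto
      moreover have "f -` A \<inter> space T \<in> sets T" using measurable_sets[OF f A] .
      ultimately show "(\<lambda>\<omega>. f (Y \<omega>)) -` A \<inter> space M \<in> sets (vimage_algebra (space M) Y T)"
        by (metis in_vimage_algebra)
    qed
    then show ?thesis
      using sets.sigma_sets_subset[of _ "vimage_algebra (space M) Y T"] by simp
  qed
  have "indep_set (sigma_sets (space M) {X -` A \<inter> space M | A. A \<in> sets S})
                  (sigma_sets (space M) {(\<lambda>\<omega>. f (Y \<omega>)) -` A \<inter> space M | A. A \<in> sets S'})"
    using ind unfolding indep_set_def
    by (rule indep_sets_mono_sets) (use s1 s2 in \<open>auto split: bool.split\<close>)
  moreover have "(\<lambda>\<omega>. f (Y \<omega>)) \<in> measurable M S'" using f Y by measurable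
  ultimately show ?thesis unfolding indep_var_eq using XM by auto
qed

lemma condexp_inner:
  fixes g V Z :: "'m \<Rightarrow> 'v::euclidean_space"
  assumes P: "prob_space M" and sub: "subalgebra M Fy"
    and Vm: "V \<in> borel_measurable Fy" and gm: "g \<in> borel_measurable M" and Zm: "Z \<in> borel_measurable M"
    and gi: "integrable M (\<lambda>\<omega>. (norm (g \<omega>))\<^sup>2)" and Vi: "integrable M (\<lambda>\<omega>. (norm (V \<omega>))\<^sup>2)"
    and Zi: "integrable M (\<lambda>\<omega>. (norm (Z \<omega>))\<^sup>2)"
    and ce: "\<And>b. b \<in> Basis \<Longrightarrow> AE \<omega> in M. real_cond_exp M Fy (\<lambda>\<omega>. g \<omega> \<bullet> b) \<omega> = Z \<omega> \<bullet> b"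
  shows "(\<integral>\<omega>. g \<omega> \<bullet> V \<omega> \<partial>M) = (\<integral>\<omega>. Z \<omega> \<bullet> V \<omega> \<partial>M)"
proof -
  interpret prob_space M by fact
  interpret FS: finite_measure_subalgebra M Fy by unfold_locales (rule sub)
  have VM[measurable]: "V \<in> borel_measurable M" using measurable_from_subalg[OF sub Vm] .
  note gm[measurable] Zm[measurable]
  have comp: "(\<integral>\<omega>. (V \<omega> \<bullet> b) * (g \<omega> \<bullet> b) \<partial>M) = (\<integral>\<omega>. (V \<omega> \<bullet> b) * (Z \<omega> \<bullet> b) \<partial>M)"
    and i1: "integrable M (\<lambda>\<omega>. (V \<omega> \<bullet> b) * (g \<omega> \<bullet> b))"
    and i2: "integrable M (\<lambda>\<omega>. (V \<omega> \<bullet> b) * (Z \<omega> \<bullet> b))" if b: "b \<in> Basis" for b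
  proof -
    show i1: "integrable M (\<lambda>\<omega>. (V \<omega> \<bullet> b) * (g \<omega> \<bullet> b))"
      by (rule L2_integrable_bound[OF Vi gi]) (use b Basis_le_norm in \<open>auto simp: abs_mult intro!: mult_mono\<close>)
    show "integrable M (\<lambda>\<omega>. (V \<omega> \<bullet> b) * (Z \<omega> \<bullet> b))"
      by (rule L2_integrable_bound[OF Vi Zi]) (use b Basis_le_norm in \<open>auto simp: abs_mult intro!: mult_mono\<close>)
    have m1: "(\<lambda>\<omega>. V \<omega> \<bullet> b) \<in> borel_measurable Fy" using Vm by measurable
    have "(\<integral>\<omega>. (V \<omega> \<bullet> b) * (g \<omega> \<bullet> b) \<partial>M) = (\<integral>\<omega>. (V \<omega> \<bullet> b) * real_cond_exp M Fy (\<lambda>\<omega>. g \<omega> \<bullet> b) \<omega> \<partial>M)"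
      by (rule FS.real_cond_exp_intg(2)[OF i1 m1, symmetric]) measurable
    also have "\<dots> = (\<integral>\<omega>. (V \<omega> \<bullet> b) * (Z \<omega> \<bullet> b) \<partial>M)"
      by (rule integral_cong_AE) (use ce[OF b] in auto)
    finally show "(\<integral>\<omega>. (V \<omega> \<bullet> b) * (g \<omega> \<bullet> b) \<partial>M) = (\<integral>\<omega>. (V \<omega> \<bullet> b) * (Z \<omega> \<bullet> b) \<partial>M)" .
  qed
  have "(\<integral>\<omega>. g \<omega> \<bullet> V \<omega> \<partial>M) = (\<integral>\<omega>. (\<Sum>b\<in>Basis. (V \<omega> \<bullet> b) * (g \<omega> \<bullet> b)) \<partial>M)"
    by (subst euclidean_inner) (simp add: mult.commute inner_commute)
  also have "\<dots> = (\<Sum>b\<in>Basis. \<integral>\<omega>. (V \<omega> \<bullet> b) * (g \<omega> \<bullet> b) \<partial>M)"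
    by (rule Bochner_Integration.integral_sum[where I=Basis and f="\<lambda>b \<omega>. (V \<omega> \<bullet> b) * (g \<omega> \<bullet> b)"]) (use i1 in auto)
  also have "\<dots> = (\<Sum>b\<in>Basis. \<integral>\<omega>. (V \<omega> \<bullet> b) * (Z \<omega> \<bullet> b) \<partial>M)"
    using comp by simp
  also have "\<dots> = (\<integral>\<omega>. (\<Sum>b\<in>Basis. (V \<omega> \<bullet> b) * (Z \<omega> \<bullet> b)) \<partial>M)"
    by (rule Bochner_Integration.integral_sum[where I=Basis and f="\<lambda>b \<omega>. (V \<omega> \<bullet> b) * (Z \<omega> \<bullet> b)", symmetric]) (use i2 in auto)
  also have "\<dots> = (\<integral>\<omega>. Z \<omega> \<bullet> V \<omega> \<partial>M)"
    by (subst (2) euclidean_inner) (simp add: mult.commute)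
  finally show ?thesis .
qed

lemma anchor_step:
  fixes Z :: "nat \<Rightarrow> 'm \<Rightarrow> real" and J :: "'m \<Rightarrow> nat" and W :: "'m \<Rightarrow> real"
  assumes P: "prob_space M" and sub: "subalgebra M Fa" and T1: "T \<ge> 1"
    and Zm: "\<And>t. t \<in> {1..T} \<Longrightarrow> Z t \<in> borel_measurable Fa"
    and Zi: "\<And>t. t \<in> {1..T} \<Longrightarrow> integrable M (Z t)"
    and Jm: "J \<in> measurable M (count_space UNIV)"
    and Ju: "distr M (count_space UNIV) J = uniform_measure (count_space UNIV) {1..T}"
    and ind: "prob_space.indep_set M (sets Fa) (sets (vimage_algebra (space M) J (count_space UNIV)))"
    and Wm: "W \<in> borel_measurable M"
    and We: "\<And>\<omega>. \<omega> \<in> space M \<Longrightarrow> J \<omega> \<in> {1..T} \<Longrightarrow> W \<omega> = Z (J \<omega>) \<omega>"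
  shows "(\<integral>\<omega>. W \<omega> \<partial>M) = (\<Sum>t=1..T. \<integral>\<omega>. Z t \<omega> \<partial>M) / T"
proof -
  interpret prob_space M by fact
  note Jm[measurable] Wm[measurable]
  have ZM[measurable]: "Z t \<in> borel_measurable M" if "t \<in> {1..T}" for t
    using measurable_from_subalg[OF sub Zm[OF that]] .
  have AEJ: "AE \<omega> in M. J \<omega> \<in> {1..T}"
  proof -
    have "AE j in uniform_measure (count_space UNIV) {1..T}. j \<in> {1..T}"
      by (rule AE_uniform_measureI) auto
    then have "AE j in distr M (count_space UNIV) J. j \<in> {1..T}" unfolding Ju .
    then show ?thesis by (rule AE_distrD[OF Jm])
  qed
  have PJ: "prob {\<omega> \<in> space M. J \<omega> = t} = 1 / T" if t: "t \<in> {1..T}" for t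
  proof -
    have "emeasure M (J -` {t} \<inter> space M) = emeasure (distr M (count_space UNIV) J) {t}"
      by (subst emeasure_distr) auto
    also have "\<dots> = emeasure (count_space UNIV) ({1..T} \<inter> {t}) / emeasure (count_space UNIV) {1..T}"
      unfolding Ju by (rule emeasure_uniform_measure) auto
    also have "\<dots> = ennreal (1 / T)"
      using t T1 by (simp add: emeasure_count_space ennreal_of_nat_eq_real_of_nat divide_ennreal[symmetric])
    finally have "emeasure M (J -` {t} \<inter> space M) = ennreal (1 / T)" .
    moreover have "J -` {t} \<inter> space M = {\<omega> \<in> space M. J \<omega> = t}" by auto
    ultimately show ?thesis by (simp add: emeasure_eq_measure)
  qed
  have tmq: "(\<integral>\<omega>. Z t \<omega> * of_bool (J \<omega> = t) \<partial>M) = (\<integral>\<omega>. Z t \<omega> \<partial>M) / T"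
    and termi: "integrable M (\<lambda>\<omega>. Z t \<omega> * of_bool (J \<omega> = t))" if t: "t \<in> {1..T}" for t
  proof -
    have fm: "(\<lambda>j::nat. of_bool (j = t) :: real) \<in> measurable (count_space UNIV) borel" by simp
    have iv: "indep_var borel (Z t) borel (\<lambda>\<omega>. of_bool (J \<omega> = t) :: real)"
      by (rule indep_var_from_sets2[OF P sub Zm[OF t] Jm fm ind])
    have i2: "integrable M (\<lambda>\<omega>. of_bool (J \<omega> = t) :: real)"
      by (rule integrable_const_bound[where B=1]) auto
    show "integrable M (\<lambda>\<omega>. Z t \<omega> * of_bool (J \<omega> = t))"
      by (rule indep_var_integrable[OF iv Zi[OF t] i2])
    have "(\<integral>\<omega>. Z t \<omega> * of_bool (J \<omega> = t) \<partial>M) = (\<integral>\<omega>. Z t \<omega> \<partial>M) * (\<integral>\<omega>. of_bool (J \<omega> = t) \<partial>M)"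
      by (rule indep_var_lebesgue_integral[OF iv Zi[OF t] i2])
    also have "(\<integral>\<omega>. of_bool (J \<omega> = t) \<partial>M) = prob {\<omega> \<in> space M. J \<omega> = t}"
    proof -
      have "(\<integral>\<omega>. of_bool (J \<omega> = t) \<partial>M) = (\<integral>\<omega>. indicator {\<omega> \<in> space M. J \<omega> = t} \<omega> \<partial>M)"
        by (rule Bochner_Integration.integral_cong) (auto simp: indicator_def)
      also have "\<dots> = prob {\<omega> \<in> space M. J \<omega> = t}" by simp
      finally show ?thesis .
    qed
    finally show "(\<integral>\<omega>. Z t \<omega> * of_bool (J \<omega> = t) \<partial>M) = (\<integral>\<omega>. Z t \<omega> \<partial>M) / T"
      using PJ[OF t] by simp
  qed
  have "(\<integral>\<omega>. W \<omega> \<partial>M) = (\<integral>\<omega>. (\<Sum>t=1..T. Z t \<omega> * of_bool (J \<omega> = t)) \<partial>M)"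
  proof (rule integral_cong_AE)
    show "(\<lambda>\<omega>. \<Sum>t = 1..T. Z t \<omega> * of_bool (J \<omega> = t)) \<in> borel_measurable M"
      by (rule borel_measurable_sum) (use ZM in measurable)
    show "AE \<omega> in M. W \<omega> = (\<Sum>t = 1..T. Z t \<omega> * of_bool (J \<omega> = t))"
      using AEJ
    proof (rule AE_mp, intro AE_I2 impI)
      fix \<omega> assume om: "\<omega> \<in> space M" and j: "J \<omega> \<in> {1..T}"
      have "(\<Sum>t = 1..T. Z t \<omega> * of_bool (J \<omega> = t)) = (\<Sum>t = 1..T. if t = J \<omega> then Z (J \<omega>) \<omega> else 0)"
        by (rule sum.cong) auto
      also have "\<dots> = Z (J \<omega>) \<omega>" using j by simp
      finally show "W \<omega> = (\<Sum>t = 1..T. Z t \<omega> * of_bool (J \<omega> = t))" using We[OF om j] by simp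
    qed
  qed simp
  also have "\<dots> = (\<Sum>t=1..T. \<integral>\<omega>. Z t \<omega> * of_bool (J \<omega> = t) \<partial>M)"
    by (rule Bochner_Integration.integral_sum[where I="{1..T}" and f="\<lambda>t \<omega>. Z t \<omega> * of_bool (J \<omega> = t)"]) (use termi in auto)
  also have "\<dots> = (\<Sum>t=1..T. (\<integral>\<omega>. Z t \<omega> \<partial>M) / T)"
    using tmq by simp
  finally show ?thesis by (simp add: sum_divide_distrib)
qed

lemma lambda_norm_bound:
  fixes gradF :: "'v::euclidean_space \<Rightarrow> 'v" and y :: "nat \<Rightarrow> 'v" and w :: "nat \<Rightarrow> real"
  assumes gm: "gradF \<in> borel_measurable borel" and I: "finite I"
    and wn: "\<And>r. r \<in> I \<Longrightarrow> 0 \<le> w r" and ws: "(\<Sum>r\<in>I. w r) = 1" and lam: "0 \<le> lam"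
  shows "lambda_norm gradF lam (\<Sum>r\<in>I. w r *\<^sub>R y r)
     \<le> norm (\<Sum>r\<in>I. w r *\<^sub>R gradF (y r)) + lam * (\<Sum>r\<in>I. w r * (norm (y r - (\<Sum>q\<in>I. w q *\<^sub>R y q)))\<^sup>2)"
proof -
  define x where "x = (\<Sum>r\<in>I. w r *\<^sub>R y r)"
  define PM where "PM = point_measure I (\<lambda>r. ennreal (w r))"
  define Q where "Q = distr PM borel y"
  have ym: "y \<in> measurable PM borel" unfolding PM_def by simp
  have PMp: "prob_space PM"
  proof (rule prob_spaceI)
    have "space PM = I" unfolding PM_def by (simp add: space_point_measure)
    then have "emeasure PM (space PM) = (\<Sum>r\<in>I. ennreal (w r))"
      unfolding PM_def using I by (simp add: emeasure_point_measure_finite)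
    also have "\<dots> = ennreal (\<Sum>r\<in>I. w r)" using wn by (simp add: sum_ennreal)
    finally show "emeasure PM (space PM) = 1" using ws by simp
  qed
  have Qp: "prob_space Q" unfolding Q_def by (rule prob_space.prob_space_distr[OF PMp ym])
  have Qs: "sets Q = sets borel" unfolding Q_def by simp
  have intQ: "integrable Q h" and intQv: "(\<integral>z. h z \<partial>Q) = (\<Sum>r\<in>I. w r *\<^sub>R h (y r))"
    if hm: "h \<in> borel_measurable borel" for h :: "'v \<Rightarrow> 'b::{banach, second_countable_topology}"
  proof -
    show "integrable Q h" unfolding Q_def
      by (subst integrable_distr_eq[OF ym hm]) (simp add: PM_def integrable_point_measure_finite I)
    show "(\<integral>z. h z \<partial>Q) = (\<Sum>r\<in>I. w r *\<^sub>R h (y r))" unfolding Q_def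
      by (subst integral_distr[OF ym hm]) (simp add: PM_def lebesgue_integral_point_measure_finite I wn)
  qed
  have m1: "(\<lambda>z::'v. z) \<in> borel_measurable borel" by simp
  have m3: "(\<lambda>z. (norm (z - x))\<^sup>2) \<in> borel_measurable borel" by measurable
  have mean: "(\<integral>z. z \<partial>Q) = x" using intQv[OF m1] by (simp add: x_def)
  have val: "norm (\<integral>z. gradF z \<partial>Q) + lam * (\<integral>z. (norm (z - x))\<^sup>2 \<partial>Q)
       = norm (\<Sum>r\<in>I. w r *\<^sub>R gradF (y r)) + lam * (\<Sum>r\<in>I. w r * (norm (y r - x))\<^sup>2)"
    using intQv[OF gm] intQv[OF m3] by simp
  let ?S = "{norm (\<integral>w. gradF w \<partial>p) + lam * (\<integral>w. (norm (w - x))\<^sup>2 \<partial>p) | p.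
            prob_space p \<and> sets p = sets borel \<and> integrable p (\<lambda>w. w) \<and> (\<integral>w. w \<partial>p) = x
            \<and> integrable p gradF \<and> integrable p (\<lambda>w. (norm (w - x))\<^sup>2)}"
  have mem: "norm (\<integral>z. gradF z \<partial>Q) + lam * (\<integral>z. (norm (z - x))\<^sup>2 \<partial>Q) \<in> ?S"
    using Qp Qs intQ[OF m1] mean intQ[OF gm] intQ[OF m3] by blast
  have bdd: "bdd_below ?S"
    by (rule bdd_belowI[where m=0]) (use lam in \<open>auto intro!: add_nonneg_nonneg mult_nonneg_nonneg integral_nonneg_AE\<close>)
  have "lambda_norm gradF lam x \<le> norm (\<integral>z. gradF z \<partial>Q) + lam * (\<integral>z. (norm (z - x))\<^sup>2 \<partial>Q)"
    unfolding lambda_norm_def by (rule cInf_lower[OF mem bdd])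
  then show ?thesis using val by (simp add: x_def)
qed

lemma weighted_var_le:
  fixes y :: "nat \<Rightarrow> 'v::euclidean_space" and w :: "nat \<Rightarrow> real"
  assumes I: "finite I" and wn: "\<And>r. r \<in> I \<Longrightarrow> 0 \<le> w r" and ws: "(\<Sum>r\<in>I. w r) = 1"
  shows "(\<Sum>r\<in>I. w r * (norm (y r - (\<Sum>q\<in>I. w q *\<^sub>R y q)))\<^sup>2) \<le> (\<Sum>r\<in>I. w r * (norm (y r - c))\<^sup>2)"
proof -
  define m where "m = (\<Sum>q\<in>I. w q *\<^sub>R y q)"
  have e: "(norm (y r - c))\<^sup>2 = (norm (y r - m))\<^sup>2 + 2 * ((y r - m) \<bullet> (m - c)) + (norm (m - c))\<^sup>2" for r
  proof -
    have g: "(norm (a + b))\<^sup>2 = (norm a)\<^sup>2 + 2 * (a \<bullet> b) + (norm b)\<^sup>2" for a b :: 'v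
      by (simp add: power2_norm_eq_inner inner_add_left inner_add_right inner_commute)
    show ?thesis using g[of "y r - m" "m - c"] by simp
  qed
  have z: "(\<Sum>r\<in>I. w r * ((y r - m) \<bullet> (m - c))) = 0"
  proof -
    have "(\<Sum>r\<in>I. w r * ((y r - m) \<bullet> (m - c))) = (\<Sum>r\<in>I. (w r *\<^sub>R (y r - m))) \<bullet> (m - c)"
      by (simp add: inner_sum_left)
    also have "(\<Sum>r\<in>I. (w r *\<^sub>R (y r - m))) = m - (\<Sum>r\<in>I. w r) *\<^sub>R m"
      by (simp add: m_def scaleR_diff_right sum_subtractf scaleR_sum_left)
    finally show ?thesis using ws by simp
  qed
  have "(\<Sum>r\<in>I. w r * (norm (y r - c))\<^sup>2) = (\<Sum>r\<in>I. w r * (norm (y r - m))\<^sup>2) + 2 * (\<Sum>r\<in>I. w r * ((y r - m) \<bullet> (m - c))) + (\<Sum>r\<in>I. w r) * (norm (m - c))\<^sup>2"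
  proof -
    have "(\<Sum>r\<in>I. w r * (norm (y r - c))\<^sup>2) = (\<Sum>r\<in>I. w r * (norm (y r - m))\<^sup>2 + 2 * (w r * ((y r - m) \<bullet> (m - c))) + w r * (norm (m - c))\<^sup>2)"
      by (rule sum.cong) (simp_all only: e distrib_left mult.left_commute)
    also have "\<dots> = (\<Sum>r\<in>I. w r * (norm (y r - m))\<^sup>2) + 2 * (\<Sum>r\<in>I. w r * ((y r - m) \<bullet> (m - c))) + (\<Sum>r\<in>I. w r) * (norm (m - c))\<^sup>2"
      by (simp only: sum.distrib sum_distrib_left sum_distrib_right)
    finally show ?thesis .
  qed
  also have "\<dots> \<ge> (\<Sum>r\<in>I. w r * (norm (y r - m))\<^sup>2)" using z ws by simp
  finally show ?thesis by (simp add: m_def)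
qed

lemma noise_bound:
  fixes \<xi> :: "nat \<Rightarrow> 'm \<Rightarrow> 'v::euclidean_space" and w :: "nat \<Rightarrow> real"
  assumes P: "prob_space M" and I: "finite I"
    and xm: "\<And>r. r \<in> I \<Longrightarrow> \<xi> r \<in> borel_measurable M"
    and xi: "\<And>r. r \<in> I \<Longrightarrow> integrable M (\<lambda>\<omega>. (norm (\<xi> r \<omega>))\<^sup>2)"
    and orth: "\<And>r q. r \<in> I \<Longrightarrow> q \<in> I \<Longrightarrow> r \<noteq> q \<Longrightarrow> (\<integral>\<omega>. \<xi> r \<omega> \<bullet> \<xi> q \<omega> \<partial>M) = 0"
    and var: "\<And>r. r \<in> I \<Longrightarrow> (\<integral>\<omega>. (norm (\<xi> r \<omega>))\<^sup>2 \<partial>M) \<le> \<sigma>\<^sup>2"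
    and sg: "0 \<le> \<sigma>"
  shows "integrable M (\<lambda>\<omega>. norm (\<Sum>r\<in>I. w r *\<^sub>R \<xi> r \<omega>))"
    "(\<integral>\<omega>. norm (\<Sum>r\<in>I. w r *\<^sub>R \<xi> r \<omega>) \<partial>M) \<le> \<sigma> * sqrt (\<Sum>r\<in>I. (w r)\<^sup>2)"
proof -
  interpret prob_space M by fact
  define X where "X = (\<lambda>\<omega>. \<Sum>r\<in>I. w r *\<^sub>R \<xi> r \<omega>)"
  have Xm: "X \<in> borel_measurable M" unfolding X_def
    by (rule borel_measurable_sum) (use xm in measurable)
  have ii: "integrable M (\<lambda>\<omega>. w r * w q * (\<xi> r \<omega> \<bullet> \<xi> q \<omega>))" if "r \<in> I" "q \<in> I" for r q
  proof -
    have "integrable M (\<lambda>\<omega>. \<xi> r \<omega> \<bullet> \<xi> q \<omega>)"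
      by (rule L2_integrable_bound[OF xi[OF that(1)] xi[OF that(2)]])
         (use xm[OF that(1)] xm[OF that(2)] Cauchy_Schwarz_ineq2 in auto)
    then show ?thesis by simp
  qed
  have sq: "(norm (X \<omega>))\<^sup>2 = (\<Sum>r\<in>I. \<Sum>q\<in>I. w r * w q * (\<xi> r \<omega> \<bullet> \<xi> q \<omega>))" for \<omega>
    unfolding X_def power2_norm_eq_inner inner_sum_left inner_sum_right
    by (simp add: sum_distrib_left mult.assoc) (subst sum.swap, simp add: mult.left_commute)
  have sqi: "integrable M (\<lambda>\<omega>. (norm (X \<omega>))\<^sup>2)"
    unfolding sq using ii by (intro Bochner_Integration.integrable_sum) auto
  have "(\<integral>\<omega>. (norm (X \<omega>))\<^sup>2 \<partial>M) = (\<Sum>r\<in>I. \<Sum>q\<in>I. \<integral>\<omega>. w r * w q * (\<xi> r \<omega> \<bullet> \<xi> q \<omega>) \<partial>M)"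
    unfolding sq using ii
    by (subst Bochner_Integration.integral_sum, fastforce intro!: Bochner_Integration.integrable_sum)
       (auto intro!: sum.cong Bochner_Integration.integral_sum)
  also have "\<dots> = (\<Sum>r\<in>I. (w r)\<^sup>2 * (\<integral>\<omega>. (norm (\<xi> r \<omega>))\<^sup>2 \<partial>M))"
  proof (rule sum.cong[OF refl])
    fix r assume r: "r \<in> I"
    have "(\<Sum>q\<in>I. \<integral>\<omega>. w r * w q * (\<xi> r \<omega> \<bullet> \<xi> q \<omega>) \<partial>M)
        = (\<Sum>q\<in>I. if q = r then (w r)\<^sup>2 * (\<integral>\<omega>. (norm (\<xi> r \<omega>))\<^sup>2 \<partial>M) else 0)"
    proof (rule sum.cong[OF refl])
      fix q assume q: "q \<in> I"
      show "(\<integral>\<omega>. w r * w q * (\<xi> r \<omega> \<bullet> \<xi> q \<omega>) \<partial>M) = (if q = r then (w r)\<^sup>2 * (\<integral>\<omega>. (norm (\<xi> r \<omega>))\<^sup>2 \<partial>M) else 0)"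
        using orth[OF r q] by (auto simp: dot_square_norm power2_eq_square)
    qed
    also have "\<dots> = (w r)\<^sup>2 * (\<integral>\<omega>. (norm (\<xi> r \<omega>))\<^sup>2 \<partial>M)" using r I by simp
    finally show "(\<Sum>q\<in>I. \<integral>\<omega>. w r * w q * (\<xi> r \<omega> \<bullet> \<xi> q \<omega>) \<partial>M) = (w r)\<^sup>2 * (\<integral>\<omega>. (norm (\<xi> r \<omega>))\<^sup>2 \<partial>M)" .
  qed
  also have "\<dots> \<le> (\<Sum>r\<in>I. (w r)\<^sup>2 * \<sigma>\<^sup>2)"
    by (rule sum_mono) (use var in \<open>auto intro!: mult_left_mono\<close>)
  finally have le: "(\<integral>\<omega>. (norm (X \<omega>))\<^sup>2 \<partial>M) \<le> \<sigma>\<^sup>2 * (\<Sum>r\<in>I. (w r)\<^sup>2)"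
    by (simp add: sum_distrib_left mult.commute)
  have r: "integrable M (\<lambda>x. norm (X x))" "(\<integral>x. norm (X x) \<partial>M) \<le> sqrt (\<integral>x. (norm (X x))\<^sup>2 \<partial>M)"
    using exp_norm_le_sqrt[OF P Xm sqi] by auto
  show "integrable M (\<lambda>\<omega>. norm (\<Sum>r\<in>I. w r *\<^sub>R \<xi> r \<omega>))" using r(1) unfolding X_def .
  have "sqrt (\<integral>x. (norm (X x))\<^sup>2 \<partial>M) \<le> sqrt (\<sigma>\<^sup>2 * (\<Sum>r\<in>I. (w r)\<^sup>2))"
    using le by (rule real_sqrt_le_mono)
  also have "\<dots> = \<sigma> * sqrt (\<Sum>r\<in>I. (w r)\<^sup>2)" using sg by (simp add: real_sqrt_mult)
  finally show "(\<integral>\<omega>. norm (\<Sum>r\<in>I. w r *\<^sub>R \<xi> r \<omega>) \<partial>M) \<le> \<sigma> * sqrt (\<Sum>r\<in>I. (w r)\<^sup>2)"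
    using r(2) unfolding X_def by linarith
qed

locale setting =
  fixes F :: "'a::euclidean_space \<Rightarrow> real" and gradF :: "'a \<Rightarrow> 'a"
    and G \<sigma> lam \<epsilon> :: real and x0 :: 'a and N T :: nat
    and M :: "'b measure"
    and D :: "nat \<Rightarrow> nat \<Rightarrow> 'b \<Rightarrow> 'a" and s :: "nat \<Rightarrow> nat \<Rightarrow> 'b \<Rightarrow> real"
    and g :: "nat \<Rightarrow> nat \<Rightarrow> 'b \<Rightarrow> 'a" and J :: "nat \<Rightarrow> 'b \<Rightarrow> nat"
    and Fpre Fy :: "nat \<Rightarrow> nat \<Rightarrow> 'b measure"
    and \<beta> \<mu> :: real
  assumes beta_def: "\<beta> = 1 - (\<epsilon> / (7 * (G + \<sigma>)))\<^sup>2"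
    and mu_def: "\<mu> = 2 * sqrt lam * sqrt \<epsilon>"
    and grad: "\<And>x. (F has_derivative (\<lambda>h. gradF x \<bullet> h)) (at x)"
    and integral_identity: "\<And>x w. ((\<lambda>t. gradF (w + t *\<^sub>R (x - w)) \<bullet> (x - w)) has_integral (F x - F w)) {0..1}"
    and grad_bound: "\<And>x. norm (gradF x) \<le> G"
    and sigma_nonneg: "\<sigma> \<ge> 0"
    and lam_pos: "lam > 0" and eps_pos: "\<epsilon> > 0" and eps_le: "\<epsilon> \<le> 7 / 2 * (G + \<sigma>)"
    and F_bdd: "bdd_below (range F)"
    and N_pos: "N \<ge> 1"
    and T_ge: "real T \<ge> 49 * (G + \<sigma>)\<^sup>2 * \<epsilon> powr (-2)"
        and M_prob: "prob_space M"
    and sub_pre: "\<And>n t. n \<in> {1..N} \<Longrightarrow> t \<in> {1..Suc T} \<Longrightarrow> subalgebra M (Fpre n t)"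
    and sub_y: "\<And>n t. n \<in> {1..N} \<Longrightarrow> t \<in> {1..T} \<Longrightarrow> subalgebra M (Fy n t)"
    and mono_pre_y: "\<And>n t. n \<in> {1..N} \<Longrightarrow> t \<in> {1..T} \<Longrightarrow> sets (Fpre n t) \<subseteq> sets (Fy n t)"
    and mono_y_pre: "\<And>n t. n \<in> {1..N} \<Longrightarrow> t \<in> {1..T} \<Longrightarrow> sets (Fy n t) \<subseteq> sets (Fpre n (Suc t))"
    and mono_epoch: "\<And>n. n \<in> {1..<N} \<Longrightarrow> sets (Fpre n (Suc T)) \<subseteq> sets (Fpre (Suc n) 1)"
        and D_meas: "\<And>n t. n \<in> {1..N} \<Longrightarrow> t \<in> {1..T} \<Longrightarrow> D n t \<in> borel_measurable (Fpre n t)"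
    and D_sq_int: "\<And>n t. n \<in> {1..N} \<Longrightarrow> t \<in> {1..T} \<Longrightarrow> integrable M (\<lambda>\<omega>. (norm (D n t \<omega>))\<^sup>2)"
        and s_meas: "\<And>n t. n \<in> {1..N} \<Longrightarrow> t \<in> {1..T} \<Longrightarrow> s n t \<in> borel_measurable (Fy n t)"
    and s_unif: "\<And>n t. n \<in> {1..N} \<Longrightarrow> t \<in> {1..T} \<Longrightarrow>
                   distr M borel (s n t) = uniform_measure lborel {0..1}"
    and s_indep: "\<And>n t. n \<in> {1..N} \<Longrightarrow> t \<in> {1..T} \<Longrightarrow>
                   prob_space.indep_set M (sets (Fpre n t)) (sets (vimage_algebra (space M) (s n t) borel))"
        and g_meas: "\<And>n t. n \<in> {1..N} \<Longrightarrow> t \<in> {1..T} \<Longrightarrow> g n t \<in> borel_measurable (Fpre n (Suc t))"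
    and g_int: "\<And>n t. n \<in> {1..N} \<Longrightarrow> t \<in> {1..T} \<Longrightarrow> integrable M (g n t)"
    and g_unbiased: "\<And>n t b. n \<in> {1..N} \<Longrightarrow> t \<in> {1..T} \<Longrightarrow> b \<in> Basis \<Longrightarrow>
                   AE \<omega> in M. real_cond_exp M (Fy n t) (\<lambda>\<omega>. g n t \<omega> \<bullet> b) \<omega>
                                = gradF (iter_y x0 D s J n t \<omega>) \<bullet> b"
    and g_var_int: "\<And>n t. n \<in> {1..N} \<Longrightarrow> t \<in> {1..T} \<Longrightarrow>
                   integrable M (\<lambda>\<omega>. (norm (g n t \<omega> - gradF (iter_y x0 D s J n t \<omega>)))\<^sup>2)"
    and g_var: "\<And>n t. n \<in> {1..N} \<Longrightarrow> t \<in> {1..T} \<Longrightarrow>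
                   AE \<omega> in M. real_cond_exp M (Fy n t)
                     (\<lambda>\<omega>. (norm (g n t \<omega> - gradF (iter_y x0 D s J n t \<omega>)))\<^sup>2) \<omega> \<le> \<sigma>\<^sup>2"
        and J_meas: "\<And>n. n \<in> {1..<N} \<Longrightarrow> J n \<in> measurable (Fpre (Suc n) 1) (count_space UNIV)"
    and J_unif: "\<And>n. n \<in> {1..<N} \<Longrightarrow>
                   distr M (count_space UNIV) (J n) = uniform_measure (count_space UNIV) {1..T}"
    and J_indep: "\<And>n. n \<in> {1..<N} \<Longrightarrow>
                   prob_space.indep_set M (sets (Fpre n (Suc T)))
                     (sets (vimage_algebra (space M) (J n) (count_space UNIV)))"
        and regret_bound: "\<And>n t u. n \<in> {1..N} \<Longrightarrow> t \<in> {1..T} \<Longrightarrow> u \<in> borel_measurable M \<Longrightarrow>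
                   integrable M (\<lambda>\<omega>. (norm (u \<omega>))\<^sup>2) \<Longrightarrow>
                   (\<integral>\<omega>. regret \<beta> \<mu> g D n t u \<omega> \<partial>M)
                     \<le> (\<integral>\<omega>. 2 * norm (u \<omega>) * (G + \<sigma>) / (\<beta> * sqrt (1 - \<beta>))
                              + \<mu> / 2 * (norm (u \<omega>))\<^sup>2 \<partial>M)"
begin

lemma prob: "prob_space M" by (rule M_prob)

definition "kap = \<epsilon> / (7 * (G + \<sigma>))"

lemma GS_pos: "G + \<sigma> > 0"
proof -
  have "0 < 7 / 2 * (G + \<sigma>)" using eps_pos eps_le by linarith
  then show ?thesis by (simp add: zero_less_mult_iff)
qed
lemma G_nonneg: "0 \<le> G" using grad_bound[of x0] norm_ge_zero[of "gradF x0"] by linarith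
lemma kap_pos: "0 < kap" unfolding kap_def using GS_pos eps_pos by simp
lemma kap_le: "kap \<le> 1/2" unfolding kap_def using GS_pos eps_le by (simp add: field_simps)
lemma beta_kap: "\<beta> = 1 - kap\<^sup>2" unfolding kap_def beta_def ..
lemma beta_lt1: "\<beta> < 1" using beta_kap kap_pos by simp
lemma beta_ge: "3/4 \<le> \<beta>"
proof -
  have "kap\<^sup>2 \<le> (1/2)\<^sup>2" using kap_pos kap_le by (intro power_mono) auto
  then show ?thesis using beta_kap by (simp add: power2_eq_square)
qed
lemma beta_pos: "0 < \<beta>" using beta_ge by simp
lemma one_minus_beta: "1 - \<beta> = kap\<^sup>2" using beta_kap by simp

lemma T_kap: "real T \<ge> 1 / kap\<^sup>2"
proof -
  have "49 * (G + \<sigma>)\<^sup>2 * \<epsilon> powr (-2) = 1 / kap\<^sup>2"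
    using eps_pos GS_pos by (simp add: kap_def powr_minus powr_realpow field_simps power2_eq_square)
  then show ?thesis using T_ge by simp
qed

lemma T_ge1: "T \<ge> 1"
proof -
  have "kap\<^sup>2 \<le> (1/2)\<^sup>2" using kap_pos kap_le by (intro power_mono) auto
  then have "1 / kap\<^sup>2 \<ge> 4" using kap_pos by (simp add: field_simps power2_eq_square)
  then show ?thesis using T_kap by linarith
qed

lemma meas_mono:
  assumes "subalgebra M F1" "subalgebra M F2" "sets F1 \<subseteq> sets F2" "f \<in> measurable F1 X"
  shows "f \<in> measurable F2 X"
proof -
  have "subalgebra F2 F1" using assms(1-3) by (auto simp: subalgebra_def)
  then show ?thesis using measurable_from_subalg assms(4) by blast
qed

lemma pre_chain:
  assumes n: "n \<in> {1..N}" and t: "1 \<le> t" "t \<le> t'" "t' \<le> Suc T"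
  shows "sets (Fpre n t) \<subseteq> sets (Fpre n t')"
  using t(2,3)
proof (induction t' rule: dec_induct)
  case base then show ?case by simp
next
  case (step k)
  have k: "k \<in> {1..T}" using step t by auto
  then show ?case using step mono_pre_y[OF n k] mono_y_pre[OF n k] by auto
qed

lemma pre_sub_M: "n \<in> {1..N} \<Longrightarrow> 1 \<le> t \<Longrightarrow> t \<le> Suc T \<Longrightarrow> subalgebra M (Fpre n t)"
  using sub_pre by auto

lemma pre_meas:
  assumes "n \<in> {1..N}" "1 \<le> t" "t \<le> t'" "t' \<le> Suc T" "f \<in> measurable (Fpre n t) X"
  shows "f \<in> measurable (Fpre n t') X"
proof -
  have "subalgebra M (Fpre n t)" "subalgebra M (Fpre n t')" using pre_sub_M assms by auto
  moreover have "sets (Fpre n t) \<subseteq> sets (Fpre n t')" using pre_chain assms by auto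
  ultimately show ?thesis using meas_mono assms(5) by blast
qed

lemma epoch_meas:
  assumes "n \<in> {1..<N}" "1 \<le> t" "t \<le> Suc T" "f \<in> measurable (Fpre n t) X"
  shows "f \<in> measurable (Fpre (Suc n) 1) X"
proof -
  have "f \<in> measurable (Fpre n (Suc T)) X" using pre_meas[OF _ assms(2) assms(3) _ assms(4)] assms(1) by auto
  moreover have "subalgebra M (Fpre n (Suc T))" "subalgebra M (Fpre (Suc n) 1)" using pre_sub_M assms T_ge1 by auto
  moreover have "sets (Fpre n (Suc T)) \<subseteq> sets (Fpre (Suc n) 1)" using mono_epoch assms by auto
  ultimately show ?thesis using meas_mono by blast
qed

definition "J' n \<omega> = (if J n \<omega> \<in> {1..T} then J n \<omega> else 1)"
definition "A n \<omega> = anchor x0 D J' n \<omega>"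
definition "Y n t \<omega> = A n \<omega> + s n t \<omega> *\<^sub>R D n t \<omega>"
definition "xi n t \<omega> = g n t \<omega> - gradF (Y n t \<omega>)"

lemma J'_in: "J' n \<omega> \<in> {1..T}" using T_ge1 by (auto simp: J'_def)

lemma A_1: "A (Suc 0) \<omega> = x0" by (simp add: A_def)
lemma A_Suc: "1 \<le> n \<Longrightarrow> A (Suc n) \<omega> = A n \<omega> + D n (J' n \<omega>) \<omega>"
  by (cases n) (auto simp: A_def)

lemma J'_fun_meas:
  fixes h :: "nat \<Rightarrow> 'x" and X :: "'x measure"
  assumes n: "n \<in> {1..<N}" and that: "h \<in> space (count_space UNIV) \<rightarrow> space X"
  shows "(\<lambda>\<omega>. h (J' n \<omega>)) \<in> measurable (Fpre (Suc n) 1) X"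
proof -
  have "(\<lambda>\<omega>. h (if J n \<omega> \<in> {1..T} then J n \<omega> else 1)) = (\<lambda>j. h (if j \<in> {1..T} then j else 1)) \<circ> J n"
    by (auto simp: fun_eq_iff)
  moreover have "(\<lambda>j. h (if j \<in> {1..T} then j else 1)) \<in> measurable (count_space UNIV) X"
    using that by (auto simp: measurable_count_space_eq1)
  ultimately show ?thesis unfolding J'_def using measurable_comp[OF J_meas[OF n]] by simp
qed

lemma DJ_meas:
  assumes n: "n \<in> {1..<N}"
  shows "(\<lambda>\<omega>. D n (J' n \<omega>) \<omega>) \<in> borel_measurable (Fpre (Suc n) 1)"
proof -
  have nN: "n \<in> {1..N}" using n by auto
  have e: "D n (J' n \<omega>) \<omega> = (\<Sum>t=1..T. (of_bool (J' n \<omega> = t) :: real) *\<^sub>R D n t \<omega>)" for \<omega>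
  proof -
    have "(\<Sum>t=1..T. (of_bool (J' n \<omega> = t) :: real) *\<^sub>R D n t \<omega>) = (\<Sum>t=1..T. if t = J' n \<omega> then D n (J' n \<omega>) \<omega> else 0)"
      by (rule sum.cong) auto
    also have "\<dots> = D n (J' n \<omega>) \<omega>" using J'_in[of n \<omega>] by simp
    finally show ?thesis by simp
  qed
  have "(\<lambda>\<omega>. (\<Sum>t=1..T. (of_bool (J' n \<omega> = t) :: real) *\<^sub>R D n t \<omega>)) \<in> borel_measurable (Fpre (Suc n) 1)"
  proof (rule borel_measurable_sum, rule borel_measurable_scaleR)
    fix t assume t: "t \<in> {1..T}"
    show "(\<lambda>\<omega>. of_bool (J' n \<omega> = t) :: real) \<in> borel_measurable (Fpre (Suc n) 1)"
      by (rule J'_fun_meas[OF n]) auto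
    show "D n t \<in> borel_measurable (Fpre (Suc n) 1)"
      by (rule epoch_meas[OF n _ _ D_meas[OF nN t]]) (use t in auto)
  qed
  then show ?thesis using e by simp
qed

lemma A_meas: "1 \<le> n \<Longrightarrow> n \<le> N \<Longrightarrow> A n \<in> borel_measurable (Fpre n 1)"
proof (induction n rule: nat_induct_at_least)
  case base then show ?case by (simp add: A_1)
next
  case (Suc n)
  have n: "n \<in> {1..<N}" using Suc by auto
  have "A n \<in> borel_measurable (Fpre (Suc n) 1)"
    by (rule epoch_meas[OF n _ _ Suc.IH]) (use Suc in auto)
  moreover note DJ_meas[OF n]
  ultimately have "(\<lambda>\<omega>. A n \<omega> + D n (J' n \<omega>) \<omega>) \<in> borel_measurable (Fpre (Suc n) 1)"
    by (rule borel_measurable_add)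
  then show ?case using A_Suc[OF Suc(1)] by simp
qed

lemma J_M: "n \<in> {1..<N} \<Longrightarrow> J n \<in> measurable M (count_space UNIV)"
  by (rule measurable_from_subalg[OF sub_pre J_meas]) auto

lemma J_AE: "n \<in> {1..<N} \<Longrightarrow> AE \<omega> in M. J n \<omega> \<in> {1..T}"
proof -
  assume n: "n \<in> {1..<N}"
  have "AE j in uniform_measure (count_space UNIV) {1..T}. j \<in> {1..T}"
    by (rule AE_uniform_measureI) auto
  then have "AE j in distr M (count_space UNIV) (J n). j \<in> {1..T}" unfolding J_unif[OF n] .
  then show ?thesis by (rule AE_distrD[OF J_M[OF n]])
qed

lemma anchor_AE: "AE \<omega> in M. \<forall>n\<in>{1..N}. anchor x0 D J n \<omega> = A n \<omega>"
proof -
  have "AE \<omega> in M. \<forall>m\<in>{1..<N}. J m \<omega> \<in> {1..T}"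
    using J_AE by (subst AE_finite_all) auto
  then show ?thesis
  proof (rule AE_mp, intro AE_I2 impI)
    fix \<omega> assume H: "\<forall>m\<in>{1..<N}. J m \<omega> \<in> {1..T}"
    have "1 \<le> n \<Longrightarrow> n \<le> N \<Longrightarrow> anchor x0 D J n \<omega> = A n \<omega>" for n
    proof (induction n rule: nat_induct_at_least)
      case base then show ?case by (simp add: A_1)
    next
      case (Suc n)
      have "J n \<omega> \<in> {1..T}" using H Suc by auto
      then have "J' n \<omega> = J n \<omega>" by (simp add: J'_def)
      moreover obtain m where "n = Suc m" using Suc(1) by (cases n) auto
      ultimately show ?case using Suc A_Suc[OF Suc(1)] by simp
    qed
    then show "\<forall>n\<in>{1..N}. anchor x0 D J n \<omega> = A n \<omega>" by auto
  qed
qed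

end

context setting begin

lemma gm[measurable]: "gradF \<in> borel_measurable borel" by (rule gradF_measurable[OF grad])
lemma Fm[measurable]: "F \<in> borel_measurable borel"
  using grad has_derivative_continuous continuous_at_imp_continuous_on
  by (intro borel_measurable_continuous_onI) blast

lemma sub_y_M: "n \<in> {1..N} \<Longrightarrow> t \<in> {1..T} \<Longrightarrow> subalgebra M (Fy n t)" by (rule sub_y)

lemma to_M: "subalgebra M F1 \<Longrightarrow> f \<in> measurable F1 X \<Longrightarrow> f \<in> measurable M X"
  using measurable_from_subalg by blast

context
  fixes n t assumes n: "n \<in> {1..N}" and t: "t \<in> {1..T}"
begin

lemma A_pre: "A n \<in> borel_measurable (Fpre n t)"
  by (rule pre_meas[OF n _ _ _ A_meas]) (use n t in auto)
lemma A_Fy: "A n \<in> borel_measurable (Fy n t)"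
  by (rule meas_mono[OF pre_sub_M sub_y mono_pre_y A_pre]) (use n t in auto)
lemma A_M[measurable]: "A n \<in> borel_measurable M"
  by (rule to_M[OF sub_y A_Fy]) (use n t in auto)
lemma D_Fy: "D n t \<in> borel_measurable (Fy n t)"
  by (rule meas_mono[OF pre_sub_M sub_y mono_pre_y D_meas]) (use n t in auto)
lemma D_M[measurable]: "D n t \<in> borel_measurable M"
  by (rule to_M[OF sub_y D_Fy]) (use n t in auto)
lemma s_M[measurable]: "s n t \<in> borel_measurable M"
  by (rule to_M[OF sub_y s_meas]) (use n t in auto)
lemma Y_Fy: "Y n t \<in> borel_measurable (Fy n t)"
  unfolding Y_def using A_Fy D_Fy s_meas[OF n t] by measurable
lemma Y_M[measurable]: "Y n t \<in> borel_measurable M"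
  by (rule to_M[OF sub_y Y_Fy]) (use n t in auto)
lemma gY_Fy: "(\<lambda>\<omega>. gradF (Y n t \<omega>)) \<in> borel_measurable (Fy n t)"
  using Y_Fy by measurable
lemma g_pre: "g n t \<in> borel_measurable (Fpre n (Suc t))" by (rule g_meas[OF n t])
lemma g_M[measurable]: "g n t \<in> borel_measurable M"
  by (rule to_M[OF sub_pre g_pre]) (use n t in auto)
lemma Y_pre: "Y n t \<in> borel_measurable (Fpre n (Suc t))"
  by (rule meas_mono[OF sub_y sub_pre mono_y_pre Y_Fy]) (use n t in auto)
lemma xi_pre: "xi n t \<in> borel_measurable (Fpre n (Suc t))"
  unfolding xi_def using g_pre Y_pre by measurable
lemma xi_M[measurable]: "xi n t \<in> borel_measurable M"
  by (rule to_M[OF sub_pre xi_pre]) (use n t in auto)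

lemma Y_AE: "AE \<omega> in M. iter_y x0 D s J n t \<omega> = Y n t \<omega>"
  using anchor_AE by eventually_elim (use n in \<open>auto simp: iter_y_def Y_def\<close>)

lemma xi_sq_int: "integrable M (\<lambda>\<omega>. (norm (xi n t \<omega>))\<^sup>2)"
proof -
  have i: "integrable M (\<lambda>\<omega>. (norm (g n t \<omega> - gradF (iter_y x0 D s J n t \<omega>)))\<^sup>2)"
    by (rule g_var_int[OF n t])
  have "AE \<omega> in M. (norm (g n t \<omega> - gradF (iter_y x0 D s J n t \<omega>)))\<^sup>2 = (norm (xi n t \<omega>))\<^sup>2"
    using Y_AE by eventually_elim (simp add: xi_def)
  then show ?thesis using i
    by (subst integrable_cong_AE[where g="\<lambda>\<omega>. (norm (g n t \<omega> - gradF (iter_y x0 D s J n t \<omega>)))\<^sup>2"])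
       (auto intro: borel_measurable_integrable)
qed

lemma gY_sq_int: "integrable M (\<lambda>\<omega>. (norm (gradF (Y n t \<omega>)))\<^sup>2)"
  by (rule finite_measure.integrable_const_bound[OF prob_space.finite_measure[OF prob], where B="G\<^sup>2"])
     (use grad_bound G_nonneg in \<open>auto intro!: power_mono\<close>)

lemma g_sq_int: "integrable M (\<lambda>\<omega>. (norm (g n t \<omega>))\<^sup>2)"
proof (rule Bochner_Integration.integrable_bound[where f="\<lambda>\<omega>. 2 * (norm (xi n t \<omega>))\<^sup>2 + 2 * (norm (gradF (Y n t \<omega>)))\<^sup>2"])
  show "integrable M (\<lambda>\<omega>. 2 * (norm (xi n t \<omega>))\<^sup>2 + 2 * (norm (gradF (Y n t \<omega>)))\<^sup>2)"
    using xi_sq_int gY_sq_int by auto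
  show "(\<lambda>\<omega>. (norm (g n t \<omega>))\<^sup>2) \<in> borel_measurable M" by measurable
  show "AE \<omega> in M. norm ((norm (g n t \<omega>))\<^sup>2) \<le> norm (2 * (norm (xi n t \<omega>))\<^sup>2 + 2 * (norm (gradF (Y n t \<omega>)))\<^sup>2)"
  proof (rule AE_I2)
    fix \<omega>
    have e: "g n t \<omega> = xi n t \<omega> + gradF (Y n t \<omega>)" by (simp add: xi_def)
    have "norm (g n t \<omega>) \<le> norm (xi n t \<omega>) + norm (gradF (Y n t \<omega>))" unfolding e by (rule norm_triangle_ineq)
    then have "(norm (g n t \<omega>))\<^sup>2 \<le> (norm (xi n t \<omega>) + norm (gradF (Y n t \<omega>)))\<^sup>2"
      by (intro power_mono) auto
    also have "\<dots> \<le> 2 * (norm (xi n t \<omega>))\<^sup>2 + 2 * (norm (gradF (Y n t \<omega>)))\<^sup>2"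
      using sum_squares_bound[of "norm (xi n t \<omega>)" "norm (gradF (Y n t \<omega>))"]
      by (simp add: power2_sum)
    finally show "norm ((norm (g n t \<omega>))\<^sup>2) \<le> norm (2 * (norm (xi n t \<omega>))\<^sup>2 + 2 * (norm (gradF (Y n t \<omega>)))\<^sup>2)"
      by simp
  qed
qed

lemma D_norm_int: "integrable M (\<lambda>\<omega>. norm (D n t \<omega>))"
  using finite_measure.square_integrable_imp_integrable[of M "\<lambda>\<omega>. norm (D n t \<omega>)"]
    D_sq_int[OF n t] prob prob_space.finite_measure by fastforce

lemma g_unb: "b \<in> Basis \<Longrightarrow> AE \<omega> in M. real_cond_exp M (Fy n t) (\<lambda>\<omega>. g n t \<omega> \<bullet> b) \<omega> = gradF (Y n t \<omega>) \<bullet> b"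
proof -
  assume b: "b \<in> Basis"
  show ?thesis using g_unbiased[OF n t b] Y_AE by eventually_elim simp
qed

lemma xi_var: "(\<integral>\<omega>. (norm (xi n t \<omega>))\<^sup>2 \<partial>M) \<le> \<sigma>\<^sup>2"
proof -
  interpret prob_space M by (rule prob)
  interpret FS: finite_measure_subalgebra M "Fy n t" by unfold_locales (rule sub_y[OF n t])
  have m1: "(\<lambda>\<omega>. (norm (g n t \<omega> - gradF (iter_y x0 D s J n t \<omega>)))\<^sup>2) \<in> borel_measurable M"
    using g_var_int[OF n t] by (rule borel_measurable_integrable)
  have "AE \<omega> in M. (norm (g n t \<omega> - gradF (iter_y x0 D s J n t \<omega>)))\<^sup>2 = (norm (xi n t \<omega>))\<^sup>2"
    using Y_AE by eventually_elim (simp add: xi_def)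
  then have ae: "AE \<omega> in M. real_cond_exp M (Fy n t) (\<lambda>\<omega>. (norm (g n t \<omega> - gradF (iter_y x0 D s J n t \<omega>)))\<^sup>2) \<omega>
      = real_cond_exp M (Fy n t) (\<lambda>\<omega>. (norm (xi n t \<omega>))\<^sup>2) \<omega>"
    by (rule FS.real_cond_exp_cong) (use m1 in auto)
  have "(\<integral>\<omega>. (norm (xi n t \<omega>))\<^sup>2 \<partial>M) = (\<integral>\<omega>. real_cond_exp M (Fy n t) (\<lambda>\<omega>. (norm (xi n t \<omega>))\<^sup>2) \<omega> \<partial>M)"
    using FS.real_cond_exp_int(2)[OF xi_sq_int] by simp
  also have "\<dots> \<le> (\<integral>\<omega>. \<sigma>\<^sup>2 \<partial>M)"
  proof (rule integral_mono_AE)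
    show "integrable M (real_cond_exp M (Fy n t) (\<lambda>\<omega>. (norm (xi n t \<omega>))\<^sup>2))"
      using FS.real_cond_exp_int(1)[OF xi_sq_int] .
    show "integrable M (\<lambda>\<omega>. \<sigma>\<^sup>2)" by simp
    show "AE \<omega> in M. real_cond_exp M (Fy n t) (\<lambda>\<omega>. (norm (xi n t \<omega>))\<^sup>2) \<omega> \<le> \<sigma>\<^sup>2"
      using g_var[OF n t] ae by eventually_elim simp
  qed
  also have "\<dots> = \<sigma>\<^sup>2" by (simp add: prob_space)
  finally show ?thesis .
qed

lemma gD_int: "integrable M (\<lambda>\<omega>. g n t \<omega> \<bullet> D n t \<omega>)"
  by (rule L2_integrable_bound[OF g_sq_int D_sq_int[OF n t]]) (auto intro: Cauchy_Schwarz_ineq2)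

lemma descent_nt:
  shows "integrable M (\<lambda>\<omega>. F (A n \<omega> + D n t \<omega>) - F (A n \<omega>))"
    "(\<integral>\<omega>. F (A n \<omega> + D n t \<omega>) - F (A n \<omega>) \<partial>M) = (\<integral>\<omega>. g n t \<omega> \<bullet> D n t \<omega> \<partial>M)"
proof -
  have P: "prob_space M" by (rule prob)
  have d: "(\<integral>\<omega>. F (A n \<omega> + D n t \<omega>) - F (A n \<omega>) \<partial>M) = (\<integral>\<omega>. gradF (A n \<omega> + s n t \<omega> *\<^sub>R D n t \<omega>) \<bullet> D n t \<omega> \<partial>M)"
    by (rule descent(2)[OF grad integral_identity grad_bound P sub_pre[OF n] A_pre D_meas[OF n t] s_M s_unif[OF n t] s_indep[OF n t] D_norm_int])
       (use t in auto)
  show "integrable M (\<lambda>\<omega>. F (A n \<omega> + D n t \<omega>) - F (A n \<omega>))"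
  proof (rule Bochner_Integration.integrable_bound[where f="\<lambda>\<omega>. G * norm (D n t \<omega>)"])
    show "integrable M (\<lambda>\<omega>. G * norm (D n t \<omega>))" using D_norm_int by simp
    show "(\<lambda>\<omega>. F (A n \<omega> + D n t \<omega>) - F (A n \<omega>)) \<in> borel_measurable M" by measurable
    show "AE \<omega> in M. norm (F (A n \<omega> + D n t \<omega>) - F (A n \<omega>)) \<le> norm (G * norm (D n t \<omega>))"
    proof (rule AE_I2)
      fix \<omega>
      show "norm (F (A n \<omega> + D n t \<omega>) - F (A n \<omega>)) \<le> norm (G * norm (D n t \<omega>))"
        using F_lip[OF integral_identity grad_bound, of "A n \<omega> + D n t \<omega>" "A n \<omega>"] G_nonneg by simp
    qed
  qed
  have "(\<integral>\<omega>. gradF (Y n t \<omega>) \<bullet> D n t \<omega> \<partial>M) = (\<integral>\<omega>. g n t \<omega> \<bullet> D n t \<omega> \<partial>M)"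
    by (rule condexp_inner[OF P sub_y[OF n t] D_Fy g_M _ g_sq_int D_sq_int[OF n t] gY_sq_int g_unb, symmetric]) measurable
  then show "(\<integral>\<omega>. F (A n \<omega> + D n t \<omega>) - F (A n \<omega>) \<partial>M) = (\<integral>\<omega>. g n t \<omega> \<bullet> D n t \<omega> \<partial>M)"
    using d by (simp add: Y_def)
qed

end

lemma xi_orth:
  assumes n: "n \<in> {1..N}" and r: "r \<in> {1..T}" and q: "q \<in> {1..T}" and rq: "r < q"
  shows "(\<integral>\<omega>. xi n r \<omega> \<bullet> xi n q \<omega> \<partial>M) = 0"
proof -
  have P: "prob_space M" by (rule prob)
  have xr: "xi n r \<in> borel_measurable (Fy n q)"
  proof -
    have "xi n r \<in> borel_measurable (Fpre n q)"
      by (rule pre_meas[OF n _ _ _ xi_pre[OF n r]]) (use r q rq in auto)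
    moreover have "subalgebra M (Fpre n q)" using pre_sub_M n q by auto
    ultimately show ?thesis using meas_mono[OF _ sub_y[OF n q] mono_pre_y[OF n q]] by blast
  qed
  have e: "(\<integral>\<omega>. g n q \<omega> \<bullet> xi n r \<omega> \<partial>M) = (\<integral>\<omega>. gradF (Y n q \<omega>) \<bullet> xi n r \<omega> \<partial>M)"
    by (rule condexp_inner[OF P sub_y[OF n q] xr g_M[OF n q] _ g_sq_int[OF n q] xi_sq_int[OF n r] gY_sq_int[OF n q] g_unb[OF n q]])
       (use Y_M[OF n q] in measurable)
  have i1: "integrable M (\<lambda>\<omega>. g n q \<omega> \<bullet> xi n r \<omega>)"
    by (rule L2_integrable_bound[OF g_sq_int[OF n q] xi_sq_int[OF n r]]) (use g_M[OF n q] xi_M[OF n r] in \<open>auto intro: Cauchy_Schwarz_ineq2\<close>)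
  have i2: "integrable M (\<lambda>\<omega>. gradF (Y n q \<omega>) \<bullet> xi n r \<omega>)"
    by (rule L2_integrable_bound[OF gY_sq_int[OF n q] xi_sq_int[OF n r]]) (use Y_M[OF n q] xi_M[OF n r] in \<open>auto intro: Cauchy_Schwarz_ineq2\<close>)
  have "(\<integral>\<omega>. xi n r \<omega> \<bullet> xi n q \<omega> \<partial>M) = (\<integral>\<omega>. g n q \<omega> \<bullet> xi n r \<omega> - gradF (Y n q \<omega>) \<bullet> xi n r \<omega> \<partial>M)"
    by (rule Bochner_Integration.integral_cong) (auto simp: xi_def[of n q] inner_diff_right inner_commute)
  also have "\<dots> = 0" using e i1 i2 by simp
  finally show ?thesis .
qed

end

context setting begin

definition "D0 = sqrt \<epsilon> / sqrt lam"
definition "Gv n t \<omega> = (\<Sum>r=1..t. \<beta> ^ (t - r) *\<^sub>R g n r \<omega>)"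
definition "uu n t \<omega> = (if Gv n t \<omega> = 0 then 0 else (- (D0 / norm (Gv n t \<omega>))) *\<^sub>R Gv n t \<omega>)"
definition "Rb = 2 * D0 * (G + \<sigma>) / (\<beta> * sqrt (1 - \<beta>)) + \<mu> / 2 * D0\<^sup>2"

lemma D0_pos: "0 < D0" unfolding D0_def using eps_pos lam_pos by simp
lemma mu_nonneg: "0 \<le> \<mu>" unfolding mu_def using eps_pos lam_pos by simp
lemma mu_D0: "\<mu> / 2 = lam * D0"
  unfolding mu_def D0_def using eps_pos lam_pos
  by (simp add: field_simps)

lemma uu_inner: "Gv n t \<omega> \<bullet> uu n t \<omega> = - D0 * norm (Gv n t \<omega>)"
  by (auto simp: uu_def power2_norm_eq_inner[symmetric] power2_eq_square)
lemma uu_norm: "norm (uu n t \<omega>) \<le> D0"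
  using D0_pos by (auto simp: uu_def)

lemma regret_expand:
  "regret \<beta> \<mu> g D n t u \<omega> =
     (\<Sum>r=1..t. \<beta> ^ (t - r) * (g n r \<omega> \<bullet> D n r \<omega>)) + \<mu> / 2 * (\<Sum>r=1..t. \<beta> ^ (t - r) * (norm (D n r \<omega>))\<^sup>2)
     - (\<Sum>r=1..t. \<beta> ^ (t - r) *\<^sub>R g n r \<omega>) \<bullet> u \<omega> - \<mu> / 2 * (\<Sum>r=1..t. \<beta> ^ (t - r)) * (norm (u \<omega>))\<^sup>2"
  unfolding regret_def loss_def
  by (simp add: inner_sum_left sum_subtractf sum.distrib sum_distrib_left sum_distrib_right algebra_simps)

lemma fin_int_const: "integrable M (\<lambda>\<omega>. c::real)"
  using prob prob_space.finite_measure finite_measure.integrable_const by blast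

lemma bounded_int:
  fixes f :: "'b \<Rightarrow> real"
  assumes "f \<in> borel_measurable M" "\<And>\<omega>. \<bar>f \<omega>\<bar> \<le> B"
  shows "integrable M f"
  by (rule finite_measure.integrable_const_bound[OF prob_space.finite_measure[OF prob], where B=B]) (use assms in auto)

definition "rho t = (1 - \<beta>) / (1 - \<beta> ^ t)"

lemma beta_pow_lt1: "1 \<le> t \<Longrightarrow> \<beta> ^ t < 1"
  using beta_pos beta_lt1 by (simp add: power_less_one_iff)

lemma rho_pos: "1 \<le> t \<Longrightarrow> 0 < rho t"
proof -
  assume "1 \<le> t"
  then have "\<beta> ^ t < 1" by (rule beta_pow_lt1)
  then show ?thesis unfolding rho_def using beta_lt1 by simp
qed

lemma rho_sum: "1 \<le> t \<Longrightarrow> rho t * (\<Sum>r=1..t. \<beta> ^ (t - r)) = 1"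
proof -
  assume "1 \<le> t"
  then have "\<beta> ^ t < 1" by (rule beta_pow_lt1)
  then show ?thesis unfolding rho_def geom_sum_beta[OF less_imp_neq[OF beta_lt1]]
    using beta_lt1 by simp
qed

lemma s_AE: "n \<in> {1..N} \<Longrightarrow> r \<in> {1..T} \<Longrightarrow> AE \<omega> in M. s n r \<omega> \<in> {0..1}"
proof -
  assume n: "n \<in> {1..N}" and r: "r \<in> {1..T}"
  have "AE x in uniform_measure lborel {0..1::real}. x \<in> {0..1}"
    by (rule AE_uniform_measureI) auto
  then have "AE x in distr M borel (s n r). x \<in> {0..1}" unfolding s_unif[OF n r] .
  then show ?thesis by (rule AE_distrD[OF s_M[OF n r]])
qed

context
  fixes n t assumes n: "n \<in> {1..N}" and t: "t \<in> {1..T}"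
begin

lemma Gv_M[measurable]: "Gv n t \<in> borel_measurable M"
  unfolding Gv_def by (rule borel_measurable_sum) (use g_M[OF n] t in auto)
lemma Gv_int: "integrable M (Gv n t)"
  unfolding Gv_def by (rule Bochner_Integration.integrable_sum) (use g_int[OF n] t in auto)
lemma Gv_norm_int: "integrable M (\<lambda>\<omega>. norm (Gv n t \<omega>))"
  using Gv_int by (rule integrable_norm)
lemma uu_M[measurable]: "uu n t \<in> borel_measurable M"
  unfolding uu_def by measurable
lemma uu_sq_int: "integrable M (\<lambda>\<omega>. (norm (uu n t \<omega>))\<^sup>2)"
  by (rule bounded_int[where B="D0\<^sup>2"]) (use uu_norm in \<open>auto intro!: power_mono\<close>)

lemma E1b:
  "(\<Sum>r=1..t. \<beta> ^ (t - r) * (\<integral>\<omega>. g n r \<omega> \<bullet> D n r \<omega> \<partial>M))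
   + \<mu> / 2 * (\<Sum>r=1..t. \<beta> ^ (t - r) * (\<integral>\<omega>. (norm (D n r \<omega>))\<^sup>2 \<partial>M))
   + D0 * (\<integral>\<omega>. norm (Gv n t \<omega>) \<partial>M)
   \<le> Rb + \<mu> / 2 * D0\<^sup>2 * (\<Sum>r=1..t. \<beta> ^ (t - r))"
proof -
  interpret prob_space M by (rule prob)
  define Z where "Z = (\<Sum>r=1..t. \<beta> ^ (t - r))"
  have Z0: "0 \<le> Z" unfolding Z_def using beta_pos by (auto intro: sum_nonneg)
  define L where "L \<omega> = (\<Sum>r=1..t. \<beta> ^ (t - r) * (g n r \<omega> \<bullet> D n r \<omega>))
      + \<mu> / 2 * (\<Sum>r=1..t. \<beta> ^ (t - r) * (norm (D n r \<omega>))\<^sup>2) + D0 * norm (Gv n t \<omega>)" for \<omega>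
  have rt: "r \<in> {1..t} \<Longrightarrow> r \<in> {1..T}" for r using t by auto
  have i1: "integrable M (\<lambda>\<omega>. \<Sum>r=1..t. \<beta> ^ (t - r) * (g n r \<omega> \<bullet> D n r \<omega>))"
    by (rule Bochner_Integration.integrable_sum) (use gD_int[OF n rt] in auto)
  have i2: "integrable M (\<lambda>\<omega>. \<Sum>r=1..t. \<beta> ^ (t - r) * (norm (D n r \<omega>))\<^sup>2)"
    by (rule Bochner_Integration.integrable_sum) (use D_sq_int[OF n rt] in auto)
  have Li: "integrable M L" unfolding L_def using i1 i2 Gv_norm_int by auto
  have intL: "(\<integral>\<omega>. L \<omega> \<partial>M) = (\<Sum>r=1..t. \<beta> ^ (t - r) * (\<integral>\<omega>. g n r \<omega> \<bullet> D n r \<omega> \<partial>M))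
   + \<mu> / 2 * (\<Sum>r=1..t. \<beta> ^ (t - r) * (\<integral>\<omega>. (norm (D n r \<omega>))\<^sup>2 \<partial>M))
   + D0 * (\<integral>\<omega>. norm (Gv n t \<omega>) \<partial>M)"
  proof -
    have "(\<integral>\<omega>. L \<omega> \<partial>M) = (\<integral>\<omega>. (\<Sum>r=1..t. \<beta> ^ (t - r) * (g n r \<omega> \<bullet> D n r \<omega>)) \<partial>M)
      + \<mu> / 2 * (\<integral>\<omega>. (\<Sum>r=1..t. \<beta> ^ (t - r) * (norm (D n r \<omega>))\<^sup>2) \<partial>M) + D0 * (\<integral>\<omega>. norm (Gv n t \<omega>) \<partial>M)"
      unfolding L_def using i1 i2 Gv_norm_int by simp
    also have "(\<integral>\<omega>. (\<Sum>r=1..t. \<beta> ^ (t - r) * (g n r \<omega> \<bullet> D n r \<omega>)) \<partial>M) = (\<Sum>r=1..t. \<beta> ^ (t - r) * (\<integral>\<omega>. g n r \<omega> \<bullet> D n r \<omega> \<partial>M))"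
      by (subst Bochner_Integration.integral_sum) (use gD_int[OF n rt] in auto)
    also have "(\<integral>\<omega>. (\<Sum>r=1..t. \<beta> ^ (t - r) * (norm (D n r \<omega>))\<^sup>2) \<partial>M) = (\<Sum>r=1..t. \<beta> ^ (t - r) * (\<integral>\<omega>. (norm (D n r \<omega>))\<^sup>2 \<partial>M))"
      by (subst Bochner_Integration.integral_sum) (use D_sq_int[OF n rt] in auto)
    finally show ?thesis .
  qed
  have Lr: "L \<omega> = regret \<beta> \<mu> g D n t (uu n t) \<omega> + \<mu> / 2 * Z * (norm (uu n t \<omega>))\<^sup>2" for \<omega>
    unfolding L_def regret_expand Z_def using uu_inner[of n t \<omega>] by (simp add: Gv_def)
  have ri: "integrable M (regret \<beta> \<mu> g D n t (uu n t))"
  proof -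
    have "integrable M (\<lambda>\<omega>. L \<omega> - \<mu> / 2 * Z * (norm (uu n t \<omega>))\<^sup>2)" using Li uu_sq_int by auto
    moreover have "(\<lambda>\<omega>. L \<omega> - \<mu> / 2 * Z * (norm (uu n t \<omega>))\<^sup>2) = regret \<beta> \<mu> g D n t (uu n t)"
      using Lr by (auto simp: fun_eq_iff)
    ultimately show ?thesis by simp
  qed
  have "(\<integral>\<omega>. L \<omega> \<partial>M) \<le> (\<integral>\<omega>. regret \<beta> \<mu> g D n t (uu n t) \<omega> + \<mu> / 2 * Z * D0\<^sup>2 \<partial>M)"
  proof (rule integral_mono[OF Li])
    show "integrable M (\<lambda>\<omega>. regret \<beta> \<mu> g D n t (uu n t) \<omega> + \<mu> / 2 * Z * D0\<^sup>2)" using ri by simp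
    fix \<omega>
    have "(norm (uu n t \<omega>))\<^sup>2 \<le> D0\<^sup>2" using uu_norm by (intro power_mono) auto
    then have "\<mu> / 2 * Z * (norm (uu n t \<omega>))\<^sup>2 \<le> \<mu> / 2 * Z * D0\<^sup>2"
      using mu_nonneg Z0 by (intro mult_left_mono) auto
    then show "L \<omega> \<le> regret \<beta> \<mu> g D n t (uu n t) \<omega> + \<mu> / 2 * Z * D0\<^sup>2" using Lr by simp
  qed
  also have "\<dots> = (\<integral>\<omega>. regret \<beta> \<mu> g D n t (uu n t) \<omega> \<partial>M) + \<mu> / 2 * Z * D0\<^sup>2"
    using ri by (simp add: prob_space)
  finally have c1: "(\<integral>\<omega>. L \<omega> \<partial>M) \<le> (\<integral>\<omega>. regret \<beta> \<mu> g D n t (uu n t) \<omega> \<partial>M) + \<mu> / 2 * Z * D0\<^sup>2" .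
  have c2: "(\<integral>\<omega>. regret \<beta> \<mu> g D n t (uu n t) \<omega> \<partial>M) \<le> Rb"
  proof -
    have "(\<integral>\<omega>. regret \<beta> \<mu> g D n t (uu n t) \<omega> \<partial>M)
        \<le> (\<integral>\<omega>. 2 * norm (uu n t \<omega>) * (G + \<sigma>) / (\<beta> * sqrt (1 - \<beta>)) + \<mu> / 2 * (norm (uu n t \<omega>))\<^sup>2 \<partial>M)"
      by (rule regret_bound[OF n t uu_M uu_sq_int])
    also have "\<dots> \<le> (\<integral>\<omega>. Rb \<partial>M)"
    proof (rule integral_mono)
      show "integrable M (\<lambda>\<omega>. 2 * norm (uu n t \<omega>) * (G + \<sigma>) / (\<beta> * sqrt (1 - \<beta>)) + \<mu> / 2 * (norm (uu n t \<omega>))\<^sup>2)"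
      proof -
        have ni: "integrable M (\<lambda>\<omega>. norm (uu n t \<omega>))"
          by (rule bounded_int[where B=D0]) (use uu_norm in auto)
        then show ?thesis using uu_sq_int by auto
      qed
      show "integrable M (\<lambda>\<omega>. Rb)" by (rule fin_int_const)
      fix \<omega>
      have a: "2 * norm (uu n t \<omega>) * (G + \<sigma>) / (\<beta> * sqrt (1 - \<beta>)) \<le> 2 * D0 * (G + \<sigma>) / (\<beta> * sqrt (1 - \<beta>))"
        using uu_norm[of n t \<omega>] GS_pos beta_pos beta_lt1
        by (intro divide_right_mono mult_right_mono) auto
      have b: "\<mu> / 2 * (norm (uu n t \<omega>))\<^sup>2 \<le> \<mu> / 2 * D0\<^sup>2"
        using uu_norm[of n t \<omega>] mu_nonneg by (intro mult_left_mono power_mono) auto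
      show "2 * norm (uu n t \<omega>) * (G + \<sigma>) / (\<beta> * sqrt (1 - \<beta>)) + \<mu> / 2 * (norm (uu n t \<omega>))\<^sup>2 \<le> Rb"
        using a b unfolding Rb_def by linarith
    qed
    also have "\<dots> = Rb" by (simp add: prob_space)
    finally show ?thesis .
  qed
  from c1 c2 show ?thesis unfolding intL Z_def by (simp add: algebra_simps)
qed

lemma E1a:
  "(\<integral>\<omega>. lambda_norm gradF lam (ybar \<beta> x0 D s J n t \<omega>) \<partial>M)
   \<le> rho t * (\<integral>\<omega>. norm (Gv n t \<omega>) \<partial>M)
     + lam * (rho t * (\<Sum>r=1..t. \<beta> ^ (t - r) * (\<integral>\<omega>. (norm (D n r \<omega>))\<^sup>2 \<partial>M)))
     + \<sigma> * sqrt (\<Sum>r=1..t. (rho t * \<beta> ^ (t - r))\<^sup>2)"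
proof -
  interpret prob_space M by (rule prob)
  have t1: "1 \<le> t" using t by auto
  have rt: "r \<in> {1..t} \<Longrightarrow> r \<in> {1..T}" for r using t by auto
  define w where "w r = rho t * \<beta> ^ (t - r)" for r
  have wn: "0 \<le> w r" for r unfolding w_def using rho_pos[OF t1] beta_pos by simp
  have ws: "(\<Sum>r=1..t. w r) = 1" unfolding w_def using rho_sum[OF t1] by (simp add: sum_distrib_left)
  define B where "B \<omega> = rho t * norm (Gv n t \<omega>) + norm (\<Sum>r=1..t. w r *\<^sub>R xi n r \<omega>)
      + lam * (rho t * (\<Sum>r=1..t. \<beta> ^ (t - r) * (norm (D n r \<omega>))\<^sup>2))" for \<omega>
  have orth: "(\<integral>\<omega>. xi n r \<omega> \<bullet> xi n q \<omega> \<partial>M) = 0" if r: "r \<in> {1..t}" and q: "q \<in> {1..t}" and rq: "r \<noteq> q" for r q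
  proof (cases "r < q")
    case True then show ?thesis by (rule xi_orth[OF n rt[OF r] rt[OF q]])
  next
    case False
    then have "q < r" using rq by simp
    then show ?thesis using xi_orth[OF n rt[OF q] rt[OF r]] by (simp add: inner_commute)
  qed
  have xiM: "\<And>r. r \<in> {1..t} \<Longrightarrow> xi n r \<in> borel_measurable M" using xi_M[OF n] rt by auto
  have xiS: "\<And>r. r \<in> {1..t} \<Longrightarrow> integrable M (\<lambda>\<omega>. (norm (xi n r \<omega>))\<^sup>2)" using xi_sq_int[OF n] rt by auto
  have xiV: "\<And>r. r \<in> {1..t} \<Longrightarrow> (\<integral>\<omega>. (norm (xi n r \<omega>))\<^sup>2 \<partial>M) \<le> \<sigma>\<^sup>2" using xi_var[OF n] rt by auto
  note nb = noise_bound[where \<xi>="\<lambda>r. xi n r" and I="{1..t}" and w=w and M=M and \<sigma>=\<sigma>, OF prob finite_atLeastAtMost xiM xiS orth xiV sigma_nonneg]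
  have i2: "integrable M (\<lambda>\<omega>. \<Sum>r=1..t. \<beta> ^ (t - r) * (norm (D n r \<omega>))\<^sup>2)"
    by (rule Bochner_Integration.integrable_sum) (use D_sq_int[OF n rt] in auto)
  have Bi: "integrable M B" unfolding B_def using Gv_norm_int nb(1) i2 by auto
  have intB: "(\<integral>\<omega>. B \<omega> \<partial>M) = rho t * (\<integral>\<omega>. norm (Gv n t \<omega>) \<partial>M)
     + (\<integral>\<omega>. norm (\<Sum>r=1..t. w r *\<^sub>R xi n r \<omega>) \<partial>M)
     + lam * (rho t * (\<Sum>r=1..t. \<beta> ^ (t - r) * (\<integral>\<omega>. (norm (D n r \<omega>))\<^sup>2 \<partial>M)))"
  proof -
    have "(\<integral>\<omega>. B \<omega> \<partial>M) = rho t * (\<integral>\<omega>. norm (Gv n t \<omega>) \<partial>M)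
     + (\<integral>\<omega>. norm (\<Sum>r=1..t. w r *\<^sub>R xi n r \<omega>) \<partial>M)
     + lam * (rho t * (\<integral>\<omega>. (\<Sum>r=1..t. \<beta> ^ (t - r) * (norm (D n r \<omega>))\<^sup>2) \<partial>M))"
      unfolding B_def using Gv_norm_int nb(1) i2 by simp
    also have "(\<integral>\<omega>. (\<Sum>r=1..t. \<beta> ^ (t - r) * (norm (D n r \<omega>))\<^sup>2) \<partial>M) = (\<Sum>r=1..t. \<beta> ^ (t - r) * (\<integral>\<omega>. (norm (D n r \<omega>))\<^sup>2 \<partial>M))"
      by (subst Bochner_Integration.integral_sum) (use D_sq_int[OF n rt] in auto)
    finally show ?thesis .
  qed
  have AEs: "AE \<omega> in M. \<forall>r\<in>{1..t}. s n r \<omega> \<in> {0..1}"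
    using s_AE[OF n rt] by (subst AE_finite_all) auto
  have pw: "AE \<omega> in M. lambda_norm gradF lam (ybar \<beta> x0 D s J n t \<omega>) \<le> B \<omega>"
    using AEs anchor_AE
  proof eventually_elim
    case (elim \<omega>)
    have an: "anchor x0 D J n \<omega> = A n \<omega>" using elim(2) n by auto
    have yb: "ybar \<beta> x0 D s J n t \<omega> = (\<Sum>r=1..t. w r *\<^sub>R Y n r \<omega>)"
      unfolding ybar_def iter_y_def an w_def rho_def
      by (simp add: scaleR_sum_right Y_def)
    have h1: "lambda_norm gradF lam (ybar \<beta> x0 D s J n t \<omega>)
        \<le> norm (\<Sum>r=1..t. w r *\<^sub>R gradF (Y n r \<omega>)) + lam * (\<Sum>r=1..t. w r * (norm (Y n r \<omega> - (\<Sum>q=1..t. w q *\<^sub>R Y n q \<omega>)))\<^sup>2)"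
      unfolding yb by (rule lambda_norm_bound[OF gm _ wn ws]) (use lam_pos in auto)
    have h2: "norm (\<Sum>r=1..t. w r *\<^sub>R gradF (Y n r \<omega>)) \<le> rho t * norm (Gv n t \<omega>) + norm (\<Sum>r=1..t. w r *\<^sub>R xi n r \<omega>)"
    proof -
      have eq: "(\<Sum>r=1..t. w r *\<^sub>R gradF (Y n r \<omega>)) = rho t *\<^sub>R Gv n t \<omega> - (\<Sum>r=1..t. w r *\<^sub>R xi n r \<omega>)"
        by (simp add: w_def Gv_def xi_def scaleR_sum_right scaleR_diff_right sum_subtractf)
      have "norm (\<Sum>r=1..t. w r *\<^sub>R gradF (Y n r \<omega>)) \<le> norm (rho t *\<^sub>R Gv n t \<omega>) + norm (\<Sum>r=1..t. w r *\<^sub>R xi n r \<omega>)"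
        unfolding eq by (rule norm_triangle_ineq4)
      then show ?thesis using rho_pos[OF t1] by simp
    qed
    have h3: "(\<Sum>r=1..t. w r * (norm (Y n r \<omega> - (\<Sum>q=1..t. w q *\<^sub>R Y n q \<omega>)))\<^sup>2)
        \<le> (\<Sum>r=1..t. w r * (norm (Y n r \<omega> - A n \<omega>))\<^sup>2)"
      by (rule weighted_var_le[OF _ wn ws]) simp
    have h4: "(\<Sum>r=1..t. w r * (norm (Y n r \<omega> - A n \<omega>))\<^sup>2) \<le> rho t * (\<Sum>r=1..t. \<beta> ^ (t - r) * (norm (D n r \<omega>))\<^sup>2)"
    proof -
      have "(\<Sum>r=1..t. w r * (norm (Y n r \<omega> - A n \<omega>))\<^sup>2) \<le> (\<Sum>r=1..t. w r * (norm (D n r \<omega>))\<^sup>2)"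
      proof (rule sum_mono)
        fix r assume r: "r \<in> {1..t}"
        have "s n r \<omega> \<in> {0..1}" using elim(1) r by auto
        then have "norm (Y n r \<omega> - A n \<omega>) \<le> norm (D n r \<omega>)"
          by (auto simp: Y_def intro!: mult_left_le_one_le)
        then show "w r * (norm (Y n r \<omega> - A n \<omega>))\<^sup>2 \<le> w r * (norm (D n r \<omega>))\<^sup>2"
          using wn by (intro mult_left_mono power_mono) auto
      qed
      then show ?thesis by (simp add: w_def sum_distrib_left mult.assoc)
    qed
    have "lam * (\<Sum>r=1..t. w r * (norm (Y n r \<omega> - (\<Sum>q=1..t. w q *\<^sub>R Y n q \<omega>)))\<^sup>2)
        \<le> lam * (rho t * (\<Sum>r=1..t. \<beta> ^ (t - r) * (norm (D n r \<omega>))\<^sup>2))"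
      using h3 h4 lam_pos by (intro mult_left_mono) auto
    then show ?case using h1 h2 unfolding B_def by linarith
  qed
  have "(\<integral>\<omega>. lambda_norm gradF lam (ybar \<beta> x0 D s J n t \<omega>) \<partial>M) \<le> (\<integral>\<omega>. B \<omega> \<partial>M)"
  proof (cases "integrable M (\<lambda>\<omega>. lambda_norm gradF lam (ybar \<beta> x0 D s J n t \<omega>))")
    case True
    then show ?thesis by (rule integral_mono_AE[OF _ Bi pw])
  next
    case False
    then have "(\<integral>\<omega>. lambda_norm gradF lam (ybar \<beta> x0 D s J n t \<omega>) \<partial>M) = 0"
      by (rule not_integrable_integral_eq)
    moreover have "0 \<le> (\<integral>\<omega>. B \<omega> \<partial>M)"
    proof (rule integral_nonneg_AE, rule AE_I2)
      fix \<omega>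
      have "0 \<le> (\<Sum>r=1..t. \<beta> ^ (t - r) * (norm (D n r \<omega>))\<^sup>2)"
        using beta_pos by (intro sum_nonneg) simp
      then show "0 \<le> B \<omega>" unfolding B_def using rho_pos[OF t1] lam_pos by simp
    qed
    ultimately show ?thesis by simp
  qed
  also have "\<dots> \<le> rho t * (\<integral>\<omega>. norm (Gv n t \<omega>) \<partial>M)
     + \<sigma> * sqrt (\<Sum>r=1..t. (w r)\<^sup>2)
     + lam * (rho t * (\<Sum>r=1..t. \<beta> ^ (t - r) * (\<integral>\<omega>. (norm (D n r \<omega>))\<^sup>2 \<partial>M)))"
    unfolding intB using nb(2) by linarith
  finally show ?thesis by (simp add: w_def)
qed

end

end

context setting begin

lemma ins: "{1..T} = insert T {1..<T}" using T_ge1 by auto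

definition "cc t = (if t < T then 1 - \<beta> else 1)"

lemma cc_nonneg: "0 \<le> cc t" unfolding cc_def using beta_lt1 by simp

lemma disc_decomp2: "(\<Sum>s=1..T. a s) = (\<Sum>t=1..T. cc t * (\<Sum>r=1..t. \<beta> ^ (t - r) * a r))"
proof -
  have "(\<Sum>t=1..T. cc t * (\<Sum>r=1..t. \<beta> ^ (t - r) * a r))
      = (\<Sum>t=1..<T. cc t * (\<Sum>r=1..t. \<beta> ^ (t - r) * a r)) + cc T * (\<Sum>r=1..T. \<beta> ^ (T - r) * a r)"
    by (subst ins) (simp add: add.commute)
  also have "(\<Sum>t=1..<T. cc t * (\<Sum>r=1..t. \<beta> ^ (t - r) * a r)) = (1 - \<beta>) * (\<Sum>t=1..<T. \<Sum>r=1..t. \<beta> ^ (t - r) * a r)"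
    by (simp add: cc_def sum_distrib_left)
  finally show ?thesis using disc_decomp[of a T \<beta>] by (simp add: cc_def)
qed

lemma cc_Z: "(\<Sum>t=1..T. cc t * (\<Sum>r=1..t. \<beta> ^ (t - r))) = real T"
  using disc_decomp2[of "\<lambda>_. 1"] by simp

lemma sum_cc: "(\<Sum>t=1..T. cc t) = (1 - \<beta>) * (real T - 1) + 1"
proof -
  have "(\<Sum>t=1..T. cc t) = (\<Sum>t=1..<T. cc t) + cc T"
    by (subst ins) (simp add: add.commute)
  also have "(\<Sum>t=1..<T. cc t) = (\<Sum>t=1..<T. 1 - \<beta>)" by (rule sum.cong) (auto simp: cc_def)
  finally show ?thesis using T_ge1 by (simp add: cc_def of_nat_diff)
qed

lemma tau_eq: "t \<in> {1..T} \<Longrightarrow> tau_prob \<beta> T t = cc t / (rho t * real T)"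
proof -
  assume t: "t \<in> {1..T}"
  then have "\<beta> ^ t < 1" using beta_pow_lt1 by auto
  then show ?thesis using t beta_lt1 T_ge1
    by (auto simp: tau_prob_def cc_def rho_def field_simps)
qed

lemma rho_ge: "1 \<le> t \<Longrightarrow> 1 - \<beta> \<le> rho t"
proof -
  assume t: "1 \<le> t"
  have "\<beta> ^ t < 1" using beta_pow_lt1[OF t] .
  moreover have "0 \<le> \<beta> ^ t" using beta_pos by simp
  ultimately show ?thesis unfolding rho_def using beta_lt1
    by (simp add: le_divide_eq mult_le_cancel_left1)
qed

lemma sqrt_1mb: "sqrt (1 - \<beta>) = kap" using one_minus_beta kap_pos by simp

lemma nz_le: "1 \<le> t \<Longrightarrow> (\<Sum>r=1..t. (rho t * \<beta> ^ (t - r))\<^sup>2) \<le> rho t"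
proof -
  assume t: "1 \<le> t"
  have "(\<Sum>r=1..t. (rho t * \<beta> ^ (t - r))\<^sup>2) \<le> (\<Sum>r=1..t. rho t * (rho t * \<beta> ^ (t - r)))"
  proof (rule sum_mono)
    fix r
    have "\<beta> ^ (t - r) \<le> 1" using beta_pos beta_lt1 by (simp add: power_le_one)
    moreover have "0 \<le> \<beta> ^ (t - r)" using beta_pos by simp
    ultimately have "\<beta> ^ (t - r) * \<beta> ^ (t - r) \<le> \<beta> ^ (t - r)" by (simp add: mult_left_le_one_le)
    then have "rho t * rho t * (\<beta> ^ (t - r) * \<beta> ^ (t - r)) \<le> rho t * rho t * \<beta> ^ (t - r)"
      using rho_pos[OF t] by (intro mult_left_mono) auto
    then show "(rho t * \<beta> ^ (t - r))\<^sup>2 \<le> rho t * (rho t * \<beta> ^ (t - r))"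
      by (simp add: power2_eq_square algebra_simps)
  qed
  also have "\<dots> = rho t * (rho t * (\<Sum>r=1..t. \<beta> ^ (t - r)))" by (simp add: sum_distrib_left)
  also have "\<dots> = rho t" using rho_sum[OF t] by simp
  finally show ?thesis .
qed

lemma NS_bound: "(\<Sum>t=1..T. tau_prob \<beta> T t * sqrt (\<Sum>r=1..t. (rho t * \<beta> ^ (t - r))\<^sup>2)) \<le> 2 * kap"
proof -
  have T0: "0 < real T" using T_ge1 by simp
  have tm: "tau_prob \<beta> T t * sqrt (\<Sum>r=1..t. (rho t * \<beta> ^ (t - r))\<^sup>2) \<le> (if t < T then kap / T else kap)"
    if t: "t \<in> {1..T}" for t
  proof -
    have t1: "1 \<le> t" using t by auto
    have rp: "0 < rho t" by (rule rho_pos[OF t1])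
    have "tau_prob \<beta> T t * sqrt (\<Sum>r=1..t. (rho t * \<beta> ^ (t - r))\<^sup>2) \<le> tau_prob \<beta> T t * sqrt (rho t)"
      using nz_le[OF t1] tau_eq[OF t] rp T0 cc_nonneg
      by (intro mult_left_mono real_sqrt_le_mono) auto
    also have "\<dots> = cc t / (sqrt (rho t) * real T)"
    proof -
      define S where "S = sqrt (rho t)"
      have S0: "0 < S" unfolding S_def using rp by simp
      have rS: "rho t = S * S" unfolding S_def using rp by simp
      show ?thesis unfolding tau_eq[OF t] S_def[symmetric] rS using S0 T0 by (simp add: field_simps)
    qed
    also have "\<dots> \<le> (if t < T then kap / T else kap)"
    proof -
      have sk: "kap \<le> sqrt (rho t)" using real_sqrt_le_mono[OF rho_ge[OF t1]] sqrt_1mb by simp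
      show ?thesis
      proof (cases "t < T")
        case True
        have "cc t / (sqrt (rho t) * real T) = kap\<^sup>2 / (sqrt (rho t) * real T)"
          using True one_minus_beta by (simp add: cc_def)
        also have "\<dots> \<le> kap\<^sup>2 / (kap * real T)"
          using sk kap_pos T0 rp by (intro divide_left_mono mult_right_mono mult_pos_pos) auto
        also have "\<dots> = kap / T" using kap_pos by (simp add: power2_eq_square)
        finally show ?thesis using True by simp
      next
        case False
        have "cc t / (sqrt (rho t) * real T) = 1 / (sqrt (rho t) * real T)"
          using False by (simp add: cc_def)
        also have "\<dots> \<le> 1 / (kap * real T)"
          using sk kap_pos T0 rp by (intro divide_left_mono mult_right_mono mult_pos_pos) auto
        also have "\<dots> \<le> kap"
        proof -
          have "1 / kap\<^sup>2 \<le> real T" by (rule T_kap)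
          then have "1 \<le> kap * (kap * real T)" using kap_pos by (simp add: field_simps power2_eq_square)
          then show ?thesis using kap_pos T0 by (simp add: field_simps)
        qed
        finally show ?thesis using False by simp
      qed
    qed
    finally show ?thesis .
  qed
  have "(\<Sum>t=1..T. tau_prob \<beta> T t * sqrt (\<Sum>r=1..t. (rho t * \<beta> ^ (t - r))\<^sup>2)) \<le> (\<Sum>t=1..T. (if t < T then kap / T else kap))"
    by (rule sum_mono) (rule tm)
  also have "(\<Sum>t=1..T. (if t < T then kap / T else kap)) = (\<Sum>t=1..<T. kap / T) + kap"
  proof -
    have "(\<Sum>t=1..T. (if t < T then kap / T else kap)) = (\<Sum>t\<in>insert T {1..<T}. (if t < T then kap / T else kap))"
      by (simp only: ins)
    also have "\<dots> = kap + (\<Sum>t=1..<T. (if t < T then kap / T else kap))" by simp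
    also have "(\<Sum>t=1..<T. (if t < T then kap / T else kap)) = (\<Sum>t=1..<T. kap / T)"
      by (rule sum.cong) auto
    finally show ?thesis by simp
  qed
  also have "\<dots> = (real T - 1) * kap / T + kap" using T_ge1 by (simp add: of_nat_diff)
  also have "\<dots> \<le> 2 * kap" using kap_pos T0 by (simp add: field_simps)
  finally show ?thesis .
qed

end

context setting begin

definition "NS = (\<Sum>t=1..T. tau_prob \<beta> T t * sqrt (\<Sum>r=1..t. (rho t * \<beta> ^ (t - r))\<^sup>2))"

lemma tau_nonneg: "t \<in> {1..T} \<Longrightarrow> 0 \<le> tau_prob \<beta> T t"
  using tau_eq cc_nonneg rho_pos T_ge1 by (auto intro!: divide_nonneg_pos)

lemma tau_rho: "t \<in> {1..T} \<Longrightarrow> tau_prob \<beta> T t * rho t = cc t / real T"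
proof -
  assume t: "t \<in> {1..T}"
  have "0 < rho t" using rho_pos t by auto
  then show ?thesis unfolding tau_eq[OF t] by simp
qed

lemma E1:
  assumes n: "n \<in> {1..N}"
  shows "(\<Sum>t=1..T. tau_prob \<beta> T t * (\<integral>\<omega>. lambda_norm gradF lam (ybar \<beta> x0 D s J n t \<omega>) \<partial>M))
    \<le> ((\<Sum>t=1..T. cc t) * Rb + \<mu> / 2 * D0\<^sup>2 * real T - (\<Sum>r=1..T. \<integral>\<omega>. g n r \<omega> \<bullet> D n r \<omega> \<partial>M)) / (D0 * real T)
      + \<sigma> * NS"
proof -
  define e where "e r = (\<integral>\<omega>. g n r \<omega> \<bullet> D n r \<omega> \<partial>M)" for r
  define q where "q r = (\<integral>\<omega>. (norm (D n r \<omega>))\<^sup>2 \<partial>M)" for r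
  define h where "h t = (\<integral>\<omega>. norm (Gv n t \<omega>) \<partial>M)" for t
  define Be where "Be t = (\<Sum>r=1..t. \<beta> ^ (t - r) * e r)" for t
  define Bq where "Bq t = (\<Sum>r=1..t. \<beta> ^ (t - r) * q r)" for t
  define Zt where "Zt t = (\<Sum>r=1..t. \<beta> ^ (t - r))" for t
  define nz where "nz t = sqrt (\<Sum>r=1..t. (rho t * \<beta> ^ (t - r))\<^sup>2)" for t
  define L where "L t = (\<integral>\<omega>. lambda_norm gradF lam (ybar \<beta> x0 D s J n t \<omega>) \<partial>M)" for t
  have T0: "0 < real T" using T_ge1 by simp
  have a: "L t \<le> rho t * h t + lam * (rho t * Bq t) + \<sigma> * nz t" if t: "t \<in> {1..T}" for t
    unfolding L_def h_def Bq_def q_def nz_def by (rule E1a[OF n t])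
  have b: "Be t + \<mu> / 2 * Bq t + D0 * h t \<le> Rb + \<mu> / 2 * D0\<^sup>2 * Zt t" if t: "t \<in> {1..T}" for t
    unfolding Be_def Bq_def e_def q_def h_def Zt_def by (rule E1b[OF n t])
  have s1: "(\<Sum>t=1..T. tau_prob \<beta> T t * L t) \<le> (\<Sum>t=1..T. tau_prob \<beta> T t * (rho t * h t + lam * (rho t * Bq t) + \<sigma> * nz t))"
    by (rule sum_mono) (use a tau_nonneg in \<open>auto intro!: mult_left_mono\<close>)
  also have "\<dots> = (\<Sum>t=1..T. cc t * (h t + lam * Bq t)) / real T + \<sigma> * NS"
  proof -
    have "(\<Sum>t=1..T. tau_prob \<beta> T t * (rho t * h t + lam * (rho t * Bq t) + \<sigma> * nz t))
        = (\<Sum>t=1..T. cc t * (h t + lam * Bq t) / real T + \<sigma> * (tau_prob \<beta> T t * nz t))"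
    proof (rule sum.cong[OF refl])
      fix t assume t: "t \<in> {1..T}"
      have "tau_prob \<beta> T t * (rho t * h t + lam * (rho t * Bq t) + \<sigma> * nz t)
          = (tau_prob \<beta> T t * rho t) * (h t + lam * Bq t) + \<sigma> * (tau_prob \<beta> T t * nz t)"
        by (simp add: algebra_simps)
      then show "tau_prob \<beta> T t * (rho t * h t + lam * (rho t * Bq t) + \<sigma> * nz t)
          = cc t * (h t + lam * Bq t) / real T + \<sigma> * (tau_prob \<beta> T t * nz t)"
        using tau_rho[OF t] by simp
    qed
    also have "\<dots> = (\<Sum>t=1..T. cc t * (h t + lam * Bq t)) / real T + \<sigma> * NS"
      by (simp add: sum.distrib sum_divide_distrib sum_distrib_left NS_def nz_def)
    finally show ?thesis .
  qed
  finally have s1': "(\<Sum>t=1..T. tau_prob \<beta> T t * L t) \<le> (\<Sum>t=1..T. cc t * (h t + lam * Bq t)) / real T + \<sigma> * NS" .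
  have s2: "(\<Sum>t=1..T. cc t * (Be t + \<mu> / 2 * Bq t + D0 * h t)) \<le> (\<Sum>t=1..T. cc t * (Rb + \<mu> / 2 * D0\<^sup>2 * Zt t))"
    by (rule sum_mono) (use b cc_nonneg in \<open>auto intro!: mult_left_mono\<close>)
  have eBe: "(\<Sum>t=1..T. cc t * Be t) = (\<Sum>r=1..T. e r)" unfolding Be_def by (rule disc_decomp2[symmetric])
  have eZ: "(\<Sum>t=1..T. cc t * Zt t) = real T" unfolding Zt_def by (rule cc_Z)
  have lhs2: "(\<Sum>t=1..T. cc t * (Be t + \<mu> / 2 * Bq t + D0 * h t))
      = (\<Sum>r=1..T. e r) + D0 * (\<Sum>t=1..T. cc t * (h t + lam * Bq t))"
  proof -
    have "(\<Sum>t=1..T. cc t * (Be t + \<mu> / 2 * Bq t + D0 * h t))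
        = (\<Sum>t=1..T. cc t * Be t) + D0 * (\<Sum>t=1..T. cc t * (h t + lam * Bq t))"
      by (simp add: sum.distrib sum_distrib_left mu_D0 algebra_simps)
    then show ?thesis using eBe by simp
  qed
  have rhs2: "(\<Sum>t=1..T. cc t * (Rb + \<mu> / 2 * D0\<^sup>2 * Zt t)) = (\<Sum>t=1..T. cc t) * Rb + \<mu> / 2 * D0\<^sup>2 * real T"
  proof -
    have "(\<Sum>t=1..T. cc t * (Rb + \<mu> / 2 * D0\<^sup>2 * Zt t)) = (\<Sum>t=1..T. cc t) * Rb + \<mu> / 2 * D0\<^sup>2 * (\<Sum>t=1..T. cc t * Zt t)"
      by (simp add: sum.distrib sum_distrib_left sum_distrib_right algebra_simps)
    then show ?thesis using eZ by simp
  qed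
  have key: "(\<Sum>t=1..T. cc t * (h t + lam * Bq t)) \<le> ((\<Sum>t=1..T. cc t) * Rb + \<mu> / 2 * D0\<^sup>2 * real T - (\<Sum>r=1..T. e r)) / D0"
    using s2 lhs2 rhs2 D0_pos by (simp add: field_simps)
  have "(\<Sum>t=1..T. cc t * (h t + lam * Bq t)) / real T \<le> ((\<Sum>t=1..T. cc t) * Rb + \<mu> / 2 * D0\<^sup>2 * real T - (\<Sum>r=1..T. e r)) / D0 / real T"
    using divide_right_mono[OF key, of "real T"] T0 by simp
  then show ?thesis using s1' unfolding L_def e_def by (simp add: field_simps)
qed

end

context setting begin

definition "Bd n \<omega> = (\<Sum>m=1..<n. \<Sum>t=1..T. norm (D m t \<omega>))"

lemma T_in: "1 \<in> {1..T}" using T_ge1 by simp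

lemma A_bound: "1 \<le> n \<Longrightarrow> norm (A n \<omega> - x0) \<le> Bd n \<omega>"
proof (induction n rule: nat_induct_at_least)
  case base then show ?case by (simp add: A_1 Bd_def)
next
  case (Suc n)
  have "norm (D n (J' n \<omega>) \<omega>) \<le> (\<Sum>t=1..T. norm (D n t \<omega>))"
    using J'_in[of n \<omega>] by (intro member_le_sum) auto
  moreover have "Bd (Suc n) \<omega> = Bd n \<omega> + (\<Sum>t=1..T. norm (D n t \<omega>))"
    using Suc(1) by (simp add: Bd_def)
  moreover have "norm (A (Suc n) \<omega> - x0) \<le> norm (A n \<omega> - x0) + norm (D n (J' n \<omega>) \<omega>)"
    using A_Suc[OF Suc(1)] norm_triangle_ineq[of "A n \<omega> - x0" "D n (J' n \<omega>) \<omega>"]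
    by (simp add: algebra_simps)
  ultimately show ?case using Suc(2) by linarith
qed

lemma FA_int: "n \<in> {1..N} \<Longrightarrow> integrable M (\<lambda>\<omega>. F (A n \<omega>))"
proof -
  assume n: "n \<in> {1..N}"
  have Bi: "integrable M (Bd n)" unfolding Bd_def
    using n by (intro Bochner_Integration.integrable_sum D_norm_int) auto
  show ?thesis
  proof (rule Bochner_Integration.integrable_bound[where f="\<lambda>\<omega>. \<bar>F x0\<bar> + G * Bd n \<omega>"])
    show "integrable M (\<lambda>\<omega>. \<bar>F x0\<bar> + G * Bd n \<omega>)" using Bi fin_int_const by auto
    show "(\<lambda>\<omega>. F (A n \<omega>)) \<in> borel_measurable M" using A_M[OF n T_in] by measurable
    show "AE \<omega> in M. norm (F (A n \<omega>)) \<le> norm (\<bar>F x0\<bar> + G * Bd n \<omega>)"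
    proof (rule AE_I2)
      fix \<omega>
      have "\<bar>F (A n \<omega>) - F x0\<bar> \<le> G * norm (A n \<omega> - x0)" by (rule F_lip[OF integral_identity grad_bound])
      also have "\<dots> \<le> G * Bd n \<omega>" using A_bound[of n \<omega>] n G_nonneg by (intro mult_left_mono) auto
      finally have "\<bar>F (A n \<omega>)\<bar> \<le> \<bar>F x0\<bar> + G * Bd n \<omega>" by linarith
      then show "norm (F (A n \<omega>)) \<le> norm (\<bar>F x0\<bar> + G * Bd n \<omega>)" by simp
    qed
  qed
qed

lemma FAD_int: "n \<in> {1..N} \<Longrightarrow> t \<in> {1..T} \<Longrightarrow> integrable M (\<lambda>\<omega>. F (A n \<omega> + D n t \<omega>))"
proof -
  assume n: "n \<in> {1..N}" and t: "t \<in> {1..T}"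
  have "integrable M (\<lambda>\<omega>. (F (A n \<omega> + D n t \<omega>) - F (A n \<omega>)) + F (A n \<omega>))"
    using descent_nt(1)[OF n t] FA_int[OF n] by (rule Bochner_Integration.integrable_add)
  then show ?thesis by simp
qed

lemma step_eq:
  assumes n: "n \<in> {1..<N}"
  shows "(\<Sum>r=1..T. \<integral>\<omega>. F (A n \<omega> + D n r \<omega>) \<partial>M) = real T * (\<integral>\<omega>. F (A (Suc n) \<omega>) \<partial>M)"
proof -
  have nN: "n \<in> {1..N}" and n1: "Suc n \<in> {1..N}" using n by auto
  have Zm: "(\<lambda>\<omega>. F (A n \<omega> + D n r \<omega>)) \<in> borel_measurable (Fpre n (Suc T))" if r: "r \<in> {1..T}" for r
  proof -
    have "A n \<in> borel_measurable (Fpre n (Suc T))"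
      by (rule pre_meas[OF nN _ _ _ A_meas]) (use n in auto)
    moreover have "D n r \<in> borel_measurable (Fpre n (Suc T))"
      by (rule pre_meas[OF nN _ _ _ D_meas[OF nN r]]) (use r in auto)
    ultimately show ?thesis by measurable
  qed
  have "(\<integral>\<omega>. F (A (Suc n) \<omega>) \<partial>M) = (\<Sum>r=1..T. \<integral>\<omega>. F (A n \<omega> + D n r \<omega>) \<partial>M) / T"
  proof (rule anchor_step[OF prob _ T_ge1 Zm FAD_int[OF nN] J_M[OF n] J_unif[OF n] J_indep[OF n]])
    show "subalgebra M (Fpre n (Suc T))" using sub_pre nN by auto
    show "(\<lambda>\<omega>. F (A (Suc n) \<omega>)) \<in> borel_measurable M" using A_M[OF n1 T_in] by measurable
    fix \<omega> assume "J n \<omega> \<in> {1..T}"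
    then show "F (A (Suc n) \<omega>) = F (A n \<omega> + D n (J n \<omega>) \<omega>)"
      using A_Suc[of n \<omega>] n by (simp add: J'_def)
  qed
  then show ?thesis using T_ge1 by simp
qed

lemma telescope:
  "(\<Sum>n=1..N. \<Sum>r=1..T. \<integral>\<omega>. F (A n \<omega>) - F (A n \<omega> + D n r \<omega>) \<partial>M) \<le> real T * (F x0 - Inf (range F))"
proof -
  define a where "a n = (\<integral>\<omega>. F (A n \<omega>) \<partial>M)" for n
  define b where "b n = (\<Sum>r=1..T. \<integral>\<omega>. F (A n \<omega> + D n r \<omega>) \<partial>M)" for n
  have inner: "(\<Sum>r=1..T. \<integral>\<omega>. F (A n \<omega>) - F (A n \<omega> + D n r \<omega>) \<partial>M) = real T * a n - b n" if n: "n \<in> {1..N}" for n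
  proof -
    have "(\<Sum>r=1..T. \<integral>\<omega>. F (A n \<omega>) - F (A n \<omega> + D n r \<omega>) \<partial>M) = (\<Sum>r=1..T. a n - (\<integral>\<omega>. F (A n \<omega> + D n r \<omega>) \<partial>M))"
      by (rule sum.cong[OF refl]) (use FA_int[OF n] FAD_int[OF n] in \<open>simp add: a_def\<close>)
    then show ?thesis by (simp add: sum_subtractf b_def)
  qed
  have tel: "K \<le> N \<Longrightarrow> (\<Sum>n=1..K. real T * a n - b n) = (if K = 0 then 0 else real T * a 1 - b K)" for K
  proof (induction K)
    case 0 then show ?case by simp
  next
    case (Suc K)
    show ?case
    proof (cases "K = 0")
      case True then show ?thesis by simp
    next
      case False
      have K: "K \<in> {1..<N}" using False Suc by auto
      have "b K = real T * a (Suc K)" unfolding a_def b_def by (rule step_eq[OF K])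
      then show ?thesis using Suc False by simp
    qed
  qed
  have a1: "a 1 = F x0" unfolding a_def using A_1 prob by (simp add: prob_space.prob_space)
  have bN: "real T * Inf (range F) \<le> b N"
  proof -
    have NN: "N \<in> {1..N}" using N_pos by auto
    have "(\<Sum>r=1..T. Inf (range F)) \<le> b N" unfolding b_def
    proof (rule sum_mono)
      fix r assume r: "r \<in> {1..T}"
      have "(\<integral>\<omega>. Inf (range F) \<partial>M) \<le> (\<integral>\<omega>. F (A N \<omega> + D N r \<omega>) \<partial>M)"
        by (rule integral_mono[OF fin_int_const FAD_int[OF NN r]]) (use F_bdd in \<open>auto intro: cInf_lower\<close>)
      then show "Inf (range F) \<le> (\<integral>\<omega>. F (A N \<omega> + D N r \<omega>) \<partial>M)" using prob by (simp add: prob_space.prob_space)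
    qed
    then show ?thesis by simp
  qed
  have "(\<Sum>n=1..N. \<Sum>r=1..T. \<integral>\<omega>. F (A n \<omega>) - F (A n \<omega> + D n r \<omega>) \<partial>M) = (\<Sum>n=1..N. real T * a n - b n)"
    by (rule sum.cong[OF refl]) (rule inner)
  also have "\<dots> = real T * a 1 - b N" using tel[of N] N_pos by simp
  finally show ?thesis using a1 bN by (simp add: algebra_simps)
qed

end

context setting begin

lemma lamD0sq: "lam * D0\<^sup>2 = \<epsilon>"
  unfolding D0_def using lam_pos eps_pos by (simp add: power_divide)

lemma C1_bound: "((\<Sum>t=1..T. cc t) * Rb + \<mu> / 2 * D0\<^sup>2 * real T) / (D0 * real T) \<le> \<epsilon> + 16/21 * \<epsilon> + \<epsilon> / 2"
proof -
  have T0: "0 < real T" using T_ge1 by simp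
  have muD: "\<mu> / 2 * D0 = \<epsilon>" using mu_D0 lamD0sq by (simp add: power2_eq_square)
  have split: "((\<Sum>t=1..T. cc t) * Rb + \<mu> / 2 * D0\<^sup>2 * real T) / (D0 * real T)
      = ((\<Sum>t=1..T. cc t) / real T) * (Rb / D0) + \<mu> / 2 * D0"
    using D0_pos T0 by (simp add: field_simps power2_eq_square)
  have RbD: "Rb / D0 = 2 * (G + \<sigma>) / (\<beta> * kap) + \<epsilon>"
    unfolding Rb_def sqrt_1mb using D0_pos muD by (simp add: field_simps power2_eq_square)
  have ccT: "(\<Sum>t=1..T. cc t) / real T \<le> 2 * kap\<^sup>2"
  proof -
    have "1 \<le> kap\<^sup>2 * real T" using T_kap kap_pos by (simp add: field_simps)
    moreover have "kap\<^sup>2 * (real T - 1) = kap\<^sup>2 * real T - kap\<^sup>2" by (simp add: algebra_simps)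
    moreover have "0 \<le> kap\<^sup>2" by simp
    ultimately have "(\<Sum>t=1..T. cc t) \<le> 2 * kap\<^sup>2 * real T"
      unfolding sum_cc one_minus_beta by linarith
    then show ?thesis using T0 by (simp add: field_simps)
  qed
  have Rpos: "0 \<le> Rb / D0" unfolding RbD using GS_pos beta_pos kap_pos eps_pos by simp
  have "((\<Sum>t=1..T. cc t) / real T) * (Rb / D0) \<le> 2 * kap\<^sup>2 * (Rb / D0)"
    using ccT Rpos by (rule mult_right_mono)
  also have "\<dots> = 4 * (kap * (G + \<sigma>)) / \<beta> + 2 * kap\<^sup>2 * \<epsilon>"
    unfolding RbD using kap_pos beta_pos by (simp add: field_simps power2_eq_square)
  also have "kap * (G + \<sigma>) = \<epsilon> / 7"
  proof -
    have "G + \<sigma> \<noteq> 0" using GS_pos by simp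
    then show ?thesis unfolding kap_def by (simp add: field_simps del: distrib_left distrib_right)
  qed
  also have "4 * (\<epsilon> / 7) / \<beta> \<le> 16 / 21 * \<epsilon>"
    using beta_ge eps_pos by (simp add: field_simps)
  also have "2 * kap\<^sup>2 * \<epsilon> \<le> \<epsilon> / 2"
  proof -
    have "kap\<^sup>2 \<le> (1/2)\<^sup>2" using kap_pos kap_le by (intro power_mono) auto
    then show ?thesis using eps_pos by (simp add: power2_eq_square)
  qed
  finally show ?thesis unfolding split muD by simp
qed

lemma noise_final: "\<sigma> * NS \<le> 2 / 7 * \<epsilon>"
proof -
  have "\<sigma> * NS \<le> \<sigma> * (2 * kap)" using NS_bound sigma_nonneg unfolding NS_def by (intro mult_left_mono) auto
  also have "\<dots> = 2 / 7 * (\<sigma> / (G + \<sigma>)) * \<epsilon>" unfolding kap_def using GS_pos by (simp add: field_simps)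
  also have "\<dots> \<le> 2 / 7 * 1 * \<epsilon>"
    using GS_pos G_nonneg sigma_nonneg eps_pos by (intro mult_right_mono mult_left_mono) auto
  finally show ?thesis by simp
qed

lemma DF_final:
  assumes Nge: "real N \<ge> 4 * (F x0 - Inf (range F)) * sqrt lam * \<epsilon> powr (-3/2)"
  shows "(F x0 - Inf (range F)) / (real N * D0) \<le> \<epsilon> / 4"
proof -
  define Df where "Df = F x0 - Inf (range F)"
  have Df0: "0 \<le> Df" unfolding Df_def using F_bdd by (simp add: cInf_lower)
  have N0: "0 < real N" using N_pos by simp
  have e32: "\<epsilon> powr (-3/2) * sqrt \<epsilon> = 1 / \<epsilon>"
  proof -
    have "\<epsilon> powr (-3/2) * sqrt \<epsilon> = \<epsilon> powr (-3/2) * \<epsilon> powr (1/2)" using eps_pos by (simp add: powr_half_sqrt)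
    also have "\<dots> = \<epsilon> powr (-1)" using eps_pos by (simp add: powr_add[symmetric])
    finally show ?thesis using eps_pos by (simp add: powr_minus inverse_eq_divide)
  qed
  have "real N * D0 \<ge> 4 * Df * sqrt lam * \<epsilon> powr (-3/2) * D0"
    using Nge D0_pos unfolding Df_def by (intro mult_right_mono) auto
  also have "4 * Df * sqrt lam * \<epsilon> powr (-3/2) * D0 = 4 * Df / \<epsilon>"
    unfolding D0_def using lam_pos eps_pos e32 by (simp add: field_simps)
  finally have ND: "4 * Df / \<epsilon> \<le> real N * D0" .
  show ?thesis
  proof (cases "Df = 0")
    case True then show ?thesis using eps_pos by (simp add: Df_def)
  next
    case False
    then have "0 < Df" using Df0 by simp
    then have "Df / (real N * D0) \<le> Df / (4 * Df / \<epsilon>)"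
      using ND eps_pos N0 D0_pos by (intro divide_left_mono mult_pos_pos) auto
    also have "\<dots> = \<epsilon> / 4" using \<open>0 < Df\<close> by simp
    finally show ?thesis unfolding Df_def .
  qed
qed

lemma main:
  assumes Nge: "real N \<ge> 4 * (F x0 - Inf (range F)) * sqrt lam * \<epsilon> powr (-3/2)"
  shows "(1 / real N) * (\<Sum>n = 1..N. \<Sum>t = 1..T.
            tau_prob \<beta> T t * (\<integral>\<omega>. lambda_norm gradF lam (ybar \<beta> x0 D s J n t \<omega>) \<partial>M))
         \<le> 4 * \<epsilon>"
proof -
  define C1 where "C1 = (\<Sum>t=1..T. cc t) * Rb + \<mu> / 2 * D0\<^sup>2 * real T"
  define Phi where "Phi n = (\<Sum>r=1..T. \<integral>\<omega>. F (A n \<omega>) - F (A n \<omega> + D n r \<omega>) \<partial>M)" for n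
  have T0: "0 < real T" using T_ge1 by simp
  have N0: "0 < real N" using N_pos by simp
  have en: "- (\<Sum>r=1..T. \<integral>\<omega>. g n r \<omega> \<bullet> D n r \<omega> \<partial>M) = Phi n" if n: "n \<in> {1..N}" for n
  proof -
    have "(\<Sum>r=1..T. \<integral>\<omega>. g n r \<omega> \<bullet> D n r \<omega> \<partial>M) = (\<Sum>r=1..T. \<integral>\<omega>. F (A n \<omega> + D n r \<omega>) - F (A n \<omega>) \<partial>M)"
      by (rule sum.cong[OF refl]) (rule descent_nt(2)[OF n, symmetric])
    also have "\<dots> = - Phi n" unfolding Phi_def
      by (simp add: sum_negf[symmetric] integral_minus[symmetric])
    finally show ?thesis by simp
  qed
  have ep: "(\<Sum>t=1..T. tau_prob \<beta> T t * (\<integral>\<omega>. lambda_norm gradF lam (ybar \<beta> x0 D s J n t \<omega>) \<partial>M))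
      \<le> C1 / (D0 * real T) + \<sigma> * NS + Phi n / (D0 * real T)" if n: "n \<in> {1..N}" for n
  proof -
    have eq: "C1 - (\<Sum>r=1..T. \<integral>\<omega>. g n r \<omega> \<bullet> D n r \<omega> \<partial>M) = C1 + Phi n" using en[OF n] by simp
    have "(C1 - (\<Sum>r=1..T. \<integral>\<omega>. g n r \<omega> \<bullet> D n r \<omega> \<partial>M)) / (D0 * real T) = C1 / (D0 * real T) + Phi n / (D0 * real T)"
      unfolding eq by (rule add_divide_distrib)
    then show ?thesis using E1[OF n, folded C1_def] by linarith
  qed
  have "(\<Sum>n = 1..N. \<Sum>t = 1..T. tau_prob \<beta> T t * (\<integral>\<omega>. lambda_norm gradF lam (ybar \<beta> x0 D s J n t \<omega>) \<partial>M))
      \<le> (\<Sum>n = 1..N. C1 / (D0 * real T) + \<sigma> * NS + Phi n / (D0 * real T))"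
    by (rule sum_mono) (rule ep)
  also have "\<dots> = real N * (C1 / (D0 * real T) + \<sigma> * NS) + (\<Sum>n=1..N. Phi n) / (D0 * real T)"
    by (simp add: sum.distrib sum_divide_distrib)
  also have "(\<Sum>n=1..N. Phi n) \<le> real T * (F x0 - Inf (range F))"
    unfolding Phi_def by (rule telescope)
  finally have S: "(\<Sum>n = 1..N. \<Sum>t = 1..T. tau_prob \<beta> T t * (\<integral>\<omega>. lambda_norm gradF lam (ybar \<beta> x0 D s J n t \<omega>) \<partial>M))
      \<le> real N * (C1 / (D0 * real T) + \<sigma> * NS) + real T * (F x0 - Inf (range F)) / (D0 * real T)"
    using D0_pos T0 by (simp add: divide_right_mono)
  have "(1 / real N) * (\<Sum>n = 1..N. \<Sum>t = 1..T. tau_prob \<beta> T t * (\<integral>\<omega>. lambda_norm gradF lam (ybar \<beta> x0 D s J n t \<omega>) \<partial>M))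
      \<le> (1 / real N) * (real N * (C1 / (D0 * real T) + \<sigma> * NS) + real T * (F x0 - Inf (range F)) / (D0 * real T))"
    using S N0 by (intro mult_left_mono) auto
  also have "\<dots> = C1 / (D0 * real T) + \<sigma> * NS + (F x0 - Inf (range F)) / (real N * D0)"
    using N0 T0 D0_pos by (simp add: field_simps)
  also have "\<dots> \<le> (\<epsilon> + 16/21 * \<epsilon> + \<epsilon> / 2) + 2 / 7 * \<epsilon> + \<epsilon> / 4"
    using C1_bound noise_final DF_final[OF Nge] unfolding C1_def by linarith
  also have "\<dots> \<le> 4 * \<epsilon>" using eps_pos by simp
  finally show ?thesis .
qed

end

theorem corollary3:
  fixes F :: "'a::euclidean_space \<Rightarrow> real" and gradF :: "'a \<Rightarrow> 'a"
    and G \<sigma> lam \<epsilon> :: real and x0 :: 'a and N T :: nat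
    and M :: "'b measure"
    and D :: "nat \<Rightarrow> nat \<Rightarrow> 'b \<Rightarrow> 'a" and s :: "nat \<Rightarrow> nat \<Rightarrow> 'b \<Rightarrow> real"
    and g :: "nat \<Rightarrow> nat \<Rightarrow> 'b \<Rightarrow> 'a" and J :: "nat \<Rightarrow> 'b \<Rightarrow> nat"
    and Fpre Fy :: "nat \<Rightarrow> nat \<Rightarrow> 'b measure"
  defines "\<beta> \<equiv> 1 - (\<epsilon> / (7 * (G + \<sigma>)))\<^sup>2"
    and "\<mu> \<equiv> 2 * sqrt lam * sqrt \<epsilon>"
    and "\<Delta>F \<equiv> F x0 - Inf (range F)"
  assumes grad: "\<And>x. (F has_derivative (\<lambda>h. gradF x \<bullet> h)) (at x)"
    and integral_identity: "\<And>x w. ((\<lambda>t. gradF (w + t *\<^sub>R (x - w)) \<bullet> (x - w)) has_integral (F x - F w)) {0..1}"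
    and grad_bound: "\<And>x. norm (gradF x) \<le> G"
    and sigma_nonneg: "\<sigma> \<ge> 0"
    and lam_pos: "lam > 0" and eps_pos: "\<epsilon> > 0" and eps_le: "\<epsilon> \<le> 7 / 2 * (G + \<sigma>)"
    and F_bdd: "bdd_below (range F)"
    and N_pos: "N \<ge> 1"
    and N_ge: "real N \<ge> 4 * \<Delta>F * sqrt lam * \<epsilon> powr (-3/2)"
    and T_ge: "real T \<ge> 49 * (G + \<sigma>)\<^sup>2 * \<epsilon> powr (-2)"
    \<comment> \<open>probability space and information structure (filtration)\<close>
    and M_prob: "prob_space M"
    and sub_pre: "\<And>n t. n \<in> {1..N} \<Longrightarrow> t \<in> {1..Suc T} \<Longrightarrow> subalgebra M (Fpre n t)"
    and sub_y: "\<And>n t. n \<in> {1..N} \<Longrightarrow> t \<in> {1..T} \<Longrightarrow> subalgebra M (Fy n t)"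
    and mono_pre_y: "\<And>n t. n \<in> {1..N} \<Longrightarrow> t \<in> {1..T} \<Longrightarrow> sets (Fpre n t) \<subseteq> sets (Fy n t)"
    and mono_y_pre: "\<And>n t. n \<in> {1..N} \<Longrightarrow> t \<in> {1..T} \<Longrightarrow> sets (Fy n t) \<subseteq> sets (Fpre n (Suc t))"
    and mono_epoch: "\<And>n. n \<in> {1..<N} \<Longrightarrow> sets (Fpre n (Suc T)) \<subseteq> sets (Fpre (Suc n) 1)"
    \<comment> \<open>online learner outputs: adapted, square integrable\<close>
    and D_meas: "\<And>n t. n \<in> {1..N} \<Longrightarrow> t \<in> {1..T} \<Longrightarrow> D n t \<in> borel_measurable (Fpre n t)"
    and D_sq_int: "\<And>n t. n \<in> {1..N} \<Longrightarrow> t \<in> {1..T} \<Longrightarrow> integrable M (\<lambda>\<omega>. (norm (D n t \<omega>))\<^sup>2)"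
    \<comment> \<open>random scaling s ~ Unif[0,1], independent of the past\<close>
    and s_meas: "\<And>n t. n \<in> {1..N} \<Longrightarrow> t \<in> {1..T} \<Longrightarrow> s n t \<in> borel_measurable (Fy n t)"
    and s_unif: "\<And>n t. n \<in> {1..N} \<Longrightarrow> t \<in> {1..T} \<Longrightarrow>
                   distr M borel (s n t) = uniform_measure lborel {0..1}"
    and s_indep: "\<And>n t. n \<in> {1..N} \<Longrightarrow> t \<in> {1..T} \<Longrightarrow>
                   prob_space.indep_set M (sets (Fpre n t)) (sets (vimage_algebra (space M) (s n t) borel))"
    \<comment> \<open>stochastic gradient oracle queried at y\<close>
    and g_meas: "\<And>n t. n \<in> {1..N} \<Longrightarrow> t \<in> {1..T} \<Longrightarrow> g n t \<in> borel_measurable (Fpre n (Suc t))"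
    and g_int: "\<And>n t. n \<in> {1..N} \<Longrightarrow> t \<in> {1..T} \<Longrightarrow> integrable M (g n t)"
    and g_unbiased: "\<And>n t b. n \<in> {1..N} \<Longrightarrow> t \<in> {1..T} \<Longrightarrow> b \<in> Basis \<Longrightarrow>
                   AE \<omega> in M. real_cond_exp M (Fy n t) (\<lambda>\<omega>. g n t \<omega> \<bullet> b) \<omega>
                                = gradF (iter_y x0 D s J n t \<omega>) \<bullet> b"
    and g_var_int: "\<And>n t. n \<in> {1..N} \<Longrightarrow> t \<in> {1..T} \<Longrightarrow>
                   integrable M (\<lambda>\<omega>. (norm (g n t \<omega> - gradF (iter_y x0 D s J n t \<omega>)))\<^sup>2)"
    and g_var: "\<And>n t. n \<in> {1..N} \<Longrightarrow> t \<in> {1..T} \<Longrightarrow>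
                   AE \<omega> in M. real_cond_exp M (Fy n t)
                     (\<lambda>\<omega>. (norm (g n t \<omega> - gradF (iter_y x0 D s J n t \<omega>)))\<^sup>2) \<omega> \<le> \<sigma>\<^sup>2"
    \<comment> \<open>next anchor: uniform index J n in {1..T}, independent of the epoch\<close>
    and J_meas: "\<And>n. n \<in> {1..<N} \<Longrightarrow> J n \<in> measurable (Fpre (Suc n) 1) (count_space UNIV)"
    and J_unif: "\<And>n. n \<in> {1..<N} \<Longrightarrow>
                   distr M (count_space UNIV) (J n) = uniform_measure (count_space UNIV) {1..T}"
    and J_indep: "\<And>n. n \<in> {1..<N} \<Longrightarrow>
                   prob_space.indep_set M (sets (Fpre n (Suc T)))
                     (sets (vimage_algebra (space M) (J n) (count_space UNIV)))"
    \<comment> \<open>regret guarantee of the learner in every epoch, for all (possibly random) comparators\<close>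
    and regret_bound: "\<And>n t u. n \<in> {1..N} \<Longrightarrow> t \<in> {1..T} \<Longrightarrow> u \<in> borel_measurable M \<Longrightarrow>
                   integrable M (\<lambda>\<omega>. (norm (u \<omega>))\<^sup>2) \<Longrightarrow>
                   (\<integral>\<omega>. regret \<beta> \<mu> g D n t u \<omega> \<partial>M)
                     \<le> (\<integral>\<omega>. 2 * norm (u \<omega>) * (G + \<sigma>) / (\<beta> * sqrt (1 - \<beta>))
                              + \<mu> / 2 * (norm (u \<omega>))\<^sup>2 \<partial>M)"
  shows "(1 / real N) * (\<Sum>n = 1..N. \<Sum>t = 1..T.
            tau_prob \<beta> T t * (\<integral>\<omega>. lambda_norm gradF lam (ybar \<beta> x0 D s J n t \<omega>) \<partial>M))
         \<le> 4 * \<epsilon>"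
  proof -
  interpret setting F gradF G \<sigma> lam \<epsilon> x0 N T M D s g J Fpre Fy \<beta> \<mu>
    apply (rule setting.intro)
    apply (simp add: \<beta>_def)
    apply (simp add: \<mu>_def)
    apply (fact assms)+
    done
  show ?thesis by (rule main[OF N_ge[unfolded \<Delta>F_def]])
qed

end
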